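(* Let $\Gamma$ be a finitely presented group acting by algebraic automorphisms on a reduced irreducible complex affine algebraic variety $M$. Then at least one of the following holds: (1) there exists a nonconstant $\Gamma$-invariant meromorphic (rational) function on $M$; or (2) there exists a point $x\in M$ such that the orbit $\Gamma x$ is Zariski dense in $M$. *)

theory Defs
  imports Complex_Main "HOL-Algebra.Group" "HOL-Algebra.Generated_Groups"
begin

inductive_set poly_funs :: "(('n::finite \<Rightarrow> complex) \<Rightarrow> complex) set" where
  pf_const: "(\<lambda>x. c) \<in> poly_funs"
| pf_var: "(\<lambda>x. x i) \<in> poly_funs"
| pf_add: "f \<in> poly_funs \<Longrightarrow> g \<in> poly_funs \<Longrightarrow> (\<lambda>x. f x + g x) \<in> poly_funs"
| pf_mult: "f \<in> poly_funs \<Longrightarrow> g \<in> poly_funs \<Longrightarrow> (\<lambda>x. f x * g x) \<in> poly_funs"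

definition zariski_closed :: "('n::finite \<Rightarrow> complex) set \<Rightarrow> bool" where
  "zariski_closed A \<longleftrightarrow> (\<exists>F. F \<subseteq> poly_funs \<and> A = {x. \<forall>f\<in>F. f x = 0})"

definition irreducible_affine_variety :: "('n::finite \<Rightarrow> complex) set \<Rightarrow> bool" where
  "irreducible_affine_variety M \<longleftrightarrow> zariski_closed M \<and> M \<noteq> {} \<and>
     (\<forall>A B. zariski_closed A \<and> zariski_closed B \<and> M \<subseteq> A \<union> B \<longrightarrow> M \<subseteq> A \<or> M \<subseteq> B)"

definition regular_map ::
  "('n::finite \<Rightarrow> complex) set \<Rightarrow> ('n \<Rightarrow> complex) set \<Rightarrow> (('n \<Rightarrow> complex) \<Rightarrow> ('n \<Rightarrow> complex)) \<Rightarrow> bool" where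
  "regular_map M N \<phi> \<longleftrightarrow> (\<forall>x\<in>M. \<phi> x \<in> N) \<and>
     (\<exists>p. (\<forall>i. p i \<in> poly_funs) \<and> (\<forall>x\<in>M. \<forall>i. \<phi> x i = p i x))"

definition algebraic_automorphism ::
  "('n::finite \<Rightarrow> complex) set \<Rightarrow> (('n \<Rightarrow> complex) \<Rightarrow> ('n \<Rightarrow> complex)) \<Rightarrow> bool" where
  "algebraic_automorphism M \<phi> \<longleftrightarrow> regular_map M M \<phi> \<and>
     (\<exists>\<psi>. regular_map M M \<psi> \<and> (\<forall>x\<in>M. \<psi> (\<phi> x) = x \<and> \<phi> (\<psi> x) = x))"

definition zariski_dense_in :: "('n::finite \<Rightarrow> complex) set \<Rightarrow> ('n \<Rightarrow> complex) set \<Rightarrow> bool" where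
  "zariski_dense_in S M \<longleftrightarrow> S \<subseteq> M \<and> (\<forall>A. zariski_closed A \<and> S \<subseteq> A \<longrightarrow> M \<subseteq> A)"

text \<open>Rational functions on M: quotients f/g of polynomial functions with g not identically
  zero on M; f1/g1 = f2/g2 iff f1 g2 = f2 g1 on M (M irreducible, so this is the function field).\<close>
definition rational_fun_rep :: "('n::finite \<Rightarrow> complex) set \<Rightarrow> (('n \<Rightarrow> complex) \<Rightarrow> complex) \<Rightarrow> (('n \<Rightarrow> complex) \<Rightarrow> complex) \<Rightarrow> bool" where
  "rational_fun_rep M f g \<longleftrightarrow> f \<in> poly_funs \<and> g \<in> poly_funs \<and> (\<exists>x\<in>M. g x \<noteq> 0)"

definition rat_eq :: "('n::finite \<Rightarrow> complex) set \<Rightarrow> (('n \<Rightarrow> complex) \<Rightarrow> complex) \<Rightarrow> (('n \<Rightarrow> complex) \<Rightarrow> complex)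
     \<Rightarrow> (('n \<Rightarrow> complex) \<Rightarrow> complex) \<Rightarrow> (('n \<Rightarrow> complex) \<Rightarrow> complex) \<Rightarrow> bool" where
  "rat_eq M f1 g1 f2 g2 \<longleftrightarrow> (\<forall>x\<in>M. f1 x * g2 x = f2 x * g1 x)"

text \<open>Words over generators: letters (b, s), b = True meaning s, b = False meaning s^-1.\<close>

fun eval_word :: "('g, 'z) monoid_scheme \<Rightarrow> (bool \<times> 'g) list \<Rightarrow> 'g" where
  "eval_word G [] = \<one>\<^bsub>G\<^esub>"
| "eval_word G ((b, s) # w) = (if b then s else inv\<^bsub>G\<^esub> s) \<otimes>\<^bsub>G\<^esub> eval_word G w"

definition word_inv :: "(bool \<times> 'g) list \<Rightarrow> (bool \<times> 'g) list" where
  "word_inv w = rev (map (\<lambda>(b, s). (\<not> b, s)) w)"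

text \<open>Words over S representing elements of the normal closure of R in the free group on S.\<close>
inductive_set rel_consequences :: "'g set \<Rightarrow> (bool \<times> 'g) list set \<Rightarrow> (bool \<times> 'g) list set"
  for S R where
  rc_nil: "[] \<in> rel_consequences S R"
| rc_rel: "r \<in> R \<Longrightarrow> r \<in> rel_consequences S R"
| rc_app: "u \<in> rel_consequences S R \<Longrightarrow> v \<in> rel_consequences S R \<Longrightarrow> u @ v \<in> rel_consequences S R"
| rc_inv: "w \<in> rel_consequences S R \<Longrightarrow> word_inv w \<in> rel_consequences S R"
| rc_conj: "w \<in> rel_consequences S R \<Longrightarrow> set x \<subseteq> UNIV \<times> S \<Longrightarrow>
            x @ w @ word_inv x \<in> rel_consequences S R"
| rc_ins: "u @ v \<in> rel_consequences S R \<Longrightarrow> s \<in> S \<Longrightarrow>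
            u @ [(b, s), (\<not> b, s)] @ v \<in> rel_consequences S R"
| rc_del: "u @ [(b, s), (\<not> b, s)] @ v \<in> rel_consequences S R \<Longrightarrow> u @ v \<in> rel_consequences S R"

definition finitely_presented :: "('g, 'z) monoid_scheme \<Rightarrow> bool" where
  "finitely_presented G \<longleftrightarrow> group G \<and>
     (\<exists>S R. finite S \<and> S \<subseteq> carrier G \<and> generate G S = carrier G \<and> finite R \<and>
        (\<forall>r\<in>R. set r \<subseteq> UNIV \<times> S \<and> eval_word G r = \<one>\<^bsub>G\<^esub>) \<and>
        (\<forall>w. set w \<subseteq> UNIV \<times> S \<and> eval_word G w = \<one>\<^bsub>G\<^esub> \<longrightarrow> w \<in> rel_consequences S R))"

definition algebraic_action ::
  "('g, 'z) monoid_scheme \<Rightarrow> ('n::finite \<Rightarrow> complex) set \<Rightarrow> ('g \<Rightarrow> ('n \<Rightarrow> complex) \<Rightarrow> ('n \<Rightarrow> complex)) \<Rightarrow> bool" where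
  "algebraic_action G M \<phi> \<longleftrightarrow>
     (\<forall>g\<in>carrier G. algebraic_automorphism M (\<phi> g)) \<and>
     (\<forall>x\<in>M. \<phi> \<one>\<^bsub>G\<^esub> x = x) \<and>
     (\<forall>g\<in>carrier G. \<forall>h\<in>carrier G. \<forall>x\<in>M. \<phi> (g \<otimes>\<^bsub>G\<^esub> h) x = \<phi> g (\<phi> h x))"

definition orbit_of :: "('g, 'z) monoid_scheme \<Rightarrow> ('g \<Rightarrow> 'p \<Rightarrow> 'p) \<Rightarrow> 'p \<Rightarrow> 'p set" where
  "orbit_of G \<phi> x = (\<lambda>g. \<phi> g x) ` carrier G"

end

theory Submission
  imports Defs "Jordan_Normal_Form.Determinant" "HOL-Analysis.Continuum_Not_Denumerable"
    "HOL-Computational_Algebra.Fundamental_Theorem_Algebra"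
begin
lemma pf_const': "(\<lambda>x. c) \<in> poly_funs" by (rule pf_const)

lemma pf_sum: "(\<And>a. a \<in> A \<Longrightarrow> f a \<in> poly_funs) \<Longrightarrow> (\<lambda>x. \<Sum>a\<in>A. f a x) \<in> poly_funs"
proof (cases "finite A")
  case True
  assume h: "\<And>a. a \<in> A \<Longrightarrow> f a \<in> poly_funs"
  from True h show ?thesis
  proof (induction A rule: finite_induct)
    case empty then show ?case by (simp add: pf_const)
  next
    case (insert a A)
    have "(\<lambda>x. f a x + (\<Sum>a\<in>A. f a x)) \<in> poly_funs"
      using insert by (intro pf_add) (auto simp: eta_contract_eq)
    then show ?case using insert by simp
  qed
qed (simp add: pf_const)

lemma pf_prod: "(\<And>a. a \<in> A \<Longrightarrow> f a \<in> poly_funs) \<Longrightarrow> (\<lambda>x. \<Prod>a\<in>A. f a x) \<in> poly_funs"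
proof (cases "finite A")
  case True
  assume h: "\<And>a. a \<in> A \<Longrightarrow> f a \<in> poly_funs"
  from True h show ?thesis
  proof (induction A rule: finite_induct)
    case empty then show ?case by (simp add: pf_const)
  next
    case (insert a A)
    have "(\<lambda>x. f a x * (\<Prod>a\<in>A. f a x)) \<in> poly_funs"
      using insert by (intro pf_mult) (auto simp: eta_contract_eq)
    then show ?case using insert by simp
  qed
qed (simp add: pf_const)

lemma pf_scale: "f \<in> poly_funs \<Longrightarrow> (\<lambda>x. c * f x) \<in> poly_funs"
proof -
  assume "f \<in> poly_funs"
  then have "(\<lambda>x. (\<lambda>x. c) x * f x) \<in> poly_funs" by (intro pf_mult pf_const)
  then show ?thesis by simp
qed

lemma pf_minus: "f \<in> poly_funs \<Longrightarrow> g \<in> poly_funs \<Longrightarrow> (\<lambda>x. f x - g x) \<in> poly_funs"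
proof -
  assume f: "f \<in> poly_funs" and g: "g \<in> poly_funs"
  have "(\<lambda>x. (-1) * g x) \<in> poly_funs" by (rule pf_scale[OF g])
  then have "(\<lambda>x. - g x) \<in> poly_funs" by simp
  then have "(\<lambda>x. f x + - g x) \<in> poly_funs" using f by (intro pf_add)
  then show ?thesis by simp
qed

lemma pf_pow: "f \<in> poly_funs \<Longrightarrow> (\<lambda>x. f x ^ k) \<in> poly_funs"
proof (induction k)
  case 0 then show ?case by (simp add: pf_const)
next
  case (Suc k) then show ?case using pf_mult[of f "\<lambda>x. f x ^ k"] by simp
qed

definition monom_fn :: "('n::finite \<Rightarrow> nat) \<Rightarrow> ('n \<Rightarrow> complex) \<Rightarrow> complex" where
  "monom_fn \<alpha> x = (\<Prod>i\<in>UNIV. x i ^ \<alpha> i)"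

lemma pf_monom: "monom_fn \<alpha> \<in> poly_funs"
proof -
  have "(\<lambda>x. \<Prod>i\<in>UNIV. x i ^ \<alpha> i) \<in> poly_funs"
    by (intro pf_prod pf_pow pf_var)
  then show ?thesis unfolding monom_fn_def[abs_def] .
qed

lemma monom_add: "monom_fn (\<lambda>i. \<alpha> i + \<beta> i) x = monom_fn \<alpha> x * monom_fn \<beta> x"
  unfolding monom_fn_def by (simp add: power_add prod.distrib)

definition Mon :: "nat \<Rightarrow> ('n::finite \<Rightarrow> nat) set" where
  "Mon D = {\<alpha>. \<forall>i. \<alpha> i \<le> D}"

lemma finite_Mon: "finite (Mon D)"
proof -
  have "Mon D \<subseteq> PiE UNIV (\<lambda>_. {..D})" unfolding Mon_def by (auto simp: PiE_def extensional_def)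
  moreover have "finite (PiE (UNIV::'a set) (\<lambda>_. {..D}))" by (intro finite_PiE) auto
  ultimately show ?thesis by (rule finite_subset)
qed

lemma pf_rep_fin: "f \<in> poly_funs \<Longrightarrow> \<exists>A c. finite A \<and> f = (\<lambda>x. \<Sum>\<alpha>\<in>A. c \<alpha> * monom_fn \<alpha> x)"
proof (induction rule: poly_funs.induct)
  case (pf_const c)
  show ?case by (rule exI[of _ "{\<lambda>_. 0}"], rule exI[of _ "\<lambda>_. c"]) (simp add: monom_fn_def)
next
  case (pf_var i)
  show ?case
  proof (rule exI[of _ "{\<lambda>j. if j = i then 1 else 0}"], rule exI[of _ "\<lambda>_. 1"], intro conjI)
    have "(\<Prod>j\<in>UNIV. x j ^ (if j = i then 1 else 0)) = x i" for x :: "'a \<Rightarrow> complex"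
    proof -
      have "(\<Prod>j\<in>UNIV. x j ^ (if j = i then 1 else 0)) = (\<Prod>j\<in>UNIV. if j = i then x j else 1)"
        by (intro prod.cong) auto
      also have "\<dots> = x i" by (subst prod.delta) auto
      finally show ?thesis .
    qed
    then show "(\<lambda>x. x i) = (\<lambda>x. \<Sum>\<alpha>\<in>{\<lambda>j. if j = i then 1 else 0}. 1 * monom_fn \<alpha> x)"
      by (simp add: monom_fn_def)
  qed simp
next
  case (pf_add f g)
  then obtain A c B d where A: "finite A" "f = (\<lambda>x. \<Sum>\<alpha>\<in>A. c \<alpha> * monom_fn \<alpha> x)"
    and B: "finite B" "g = (\<lambda>x. \<Sum>\<alpha>\<in>B. d \<alpha> * monom_fn \<alpha> x)" by blast
  let ?c = "\<lambda>\<alpha>. (if \<alpha> \<in> A then c \<alpha> else 0) + (if \<alpha> \<in> B then d \<alpha> else 0)"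
  have "\<And>x. f x + g x = (\<Sum>\<alpha>\<in>A \<union> B. ?c \<alpha> * monom_fn \<alpha> x)"
  proof -
    fix x
    have 1: "(\<Sum>\<alpha>\<in>A. c \<alpha> * monom_fn \<alpha> x) = (\<Sum>\<alpha>\<in>A \<union> B. (if \<alpha> \<in> A then c \<alpha> else 0) * monom_fn \<alpha> x)"
      by (rule sum.mono_neutral_cong_left) (use A B in auto)
    have 2: "(\<Sum>\<alpha>\<in>B. d \<alpha> * monom_fn \<alpha> x) = (\<Sum>\<alpha>\<in>A \<union> B. (if \<alpha> \<in> B then d \<alpha> else 0) * monom_fn \<alpha> x)"
      by (rule sum.mono_neutral_cong_left) (use A B in auto)
    show "f x + g x = (\<Sum>\<alpha>\<in>A \<union> B. ?c \<alpha> * monom_fn \<alpha> x)"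
      unfolding A(2) B(2) 1 2 by (simp add: sum.distrib distrib_right)
  qed
  then show ?case using A B by (intro exI[of _ "A \<union> B"] exI[of _ ?c]) auto
next
  case (pf_mult f g)
  then obtain A c B d where A: "finite A" "f = (\<lambda>x. \<Sum>\<alpha>\<in>A. c \<alpha> * monom_fn \<alpha> x)"
    and B: "finite B" "g = (\<lambda>x. \<Sum>\<alpha>\<in>B. d \<alpha> * monom_fn \<alpha> x)" by blast
  define h where "h = (\<lambda>p::('a\<Rightarrow>nat)\<times>('a\<Rightarrow>nat). (\<lambda>i. fst p i + snd p i))"
  define e where "e = (\<lambda>\<gamma>. \<Sum>p\<in>{p \<in> A \<times> B. h p = \<gamma>}. c (fst p) * d (snd p))"
  have "\<And>x. f x * g x = (\<Sum>\<gamma>\<in>h ` (A \<times> B). e \<gamma> * monom_fn \<gamma> x)"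
  proof -
    fix x
    have "f x * g x = (\<Sum>p\<in>A \<times> B. c (fst p) * d (snd p) * monom_fn (h p) x)"
      unfolding A(2) B(2) sum_product sum.cartesian_product h_def
      by (rule sum.cong) (auto simp: monom_add)
    also have "\<dots> = (\<Sum>\<gamma>\<in>h ` (A \<times> B). \<Sum>p\<in>{p \<in> A \<times> B. h p = \<gamma>}. c (fst p) * d (snd p) * monom_fn (h p) x)"
      by (rule sum.image_gen) (use A B in auto)
    also have "\<dots> = (\<Sum>\<gamma>\<in>h ` (A \<times> B). e \<gamma> * monom_fn \<gamma> x)"
      unfolding e_def sum_distrib_right by (intro sum.cong refl) auto
    finally show "f x * g x = (\<Sum>\<gamma>\<in>h ` (A \<times> B). e \<gamma> * monom_fn \<gamma> x)" .
  qed
  then show ?case using A B by (intro exI[of _ "h ` (A \<times> B)"] exI[of _ e]) auto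
qed

lemma pf_rep: "f \<in> poly_funs \<Longrightarrow> \<exists>D c. \<forall>x. f x = (\<Sum>\<alpha>\<in>Mon D. c \<alpha> * monom_fn \<alpha> x)"
proof -
  assume "f \<in> poly_funs"
  then obtain A c where A: "finite A" "f = (\<lambda>x. \<Sum>\<alpha>\<in>A. c \<alpha> * monom_fn \<alpha> x)"
    using pf_rep_fin by blast
  define D where "D = Max ((\<lambda>(\<alpha>,i). \<alpha> i) ` (A \<times> UNIV))"
  have AD: "A \<subseteq> Mon D"
  proof
    fix \<alpha> assume "\<alpha> \<in> A"
    then have "\<alpha> i \<le> D" for i unfolding D_def
      by (intro Max_ge) (use A in auto)
    then show "\<alpha> \<in> Mon D" unfolding Mon_def by auto
  qed
  have eq: "f x = (\<Sum>\<alpha>\<in>Mon D. (if \<alpha> \<in> A then c \<alpha> else 0) * monom_fn \<alpha> x)" for x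
    unfolding A(2) by (rule sum.mono_neutral_cong_left) (use AD finite_Mon in auto)
  show ?thesis apply (rule exI[of _ D]) apply (rule exI[of _ "\<lambda>\<alpha>. if \<alpha> \<in> A then c \<alpha> else 0"])
    using eq by blast
qed

lemma pf_comp: "f \<in> poly_funs \<Longrightarrow> (\<And>i. p i \<in> poly_funs) \<Longrightarrow> (\<lambda>x. f (\<lambda>i. p i x)) \<in> poly_funs"
proof (induction rule: poly_funs.induct)
  case (pf_const c) show ?case by (rule poly_funs.pf_const)
next
  case (pf_var i) then show ?case by (simp add: eta_contract_eq)
next
  case (pf_add f g) then show ?case by (intro poly_funs.pf_add) auto
next
  case (pf_mult f g) then show ?case by (intro poly_funs.pf_mult) auto
qed

lemma zc_zero: "h \<in> poly_funs \<Longrightarrow> zariski_closed {x. h x = 0}"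
  unfolding zariski_closed_def by (rule exI[of _ "{h}"]) auto

lemma irr2:
  assumes M: "irreducible_affine_variety M" and a: "a \<in> poly_funs" and b: "b \<in> poly_funs"
    and ab: "\<And>x. x \<in> M \<Longrightarrow> a x = 0 \<or> b x = 0"
  shows "(\<forall>x\<in>M. a x = 0) \<or> (\<forall>x\<in>M. b x = 0)"
proof -
  have "M \<subseteq> {x. a x = 0} \<union> {x. b x = 0}" using ab by auto
  then have "M \<subseteq> {x. a x = 0} \<or> M \<subseteq> {x. b x = 0}"
    using M zc_zero[OF a] zc_zero[OF b] unfolding irreducible_affine_variety_def by blast
  then show ?thesis by auto
qed

lemma irr_mult:
  assumes M: "irreducible_affine_variety M" and a: "a \<in> poly_funs" and b: "b \<in> poly_funs"
    and a0: "\<exists>x\<in>M. a x \<noteq> 0" and b0: "\<exists>x\<in>M. b x \<noteq> 0"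
  shows "\<exists>x\<in>M. a x * b x \<noteq> 0"
  using irr2[OF M a b] a0 b0 by auto

lemma irr_cancel:
  assumes M: "irreducible_affine_variety M" and a: "a \<in> poly_funs" and b: "b \<in> poly_funs"
    and a0: "\<exists>x\<in>M. a x \<noteq> 0" and ab: "\<And>x. x \<in> M \<Longrightarrow> a x \<noteq> 0 \<Longrightarrow> b x = 0"
  shows "\<forall>x\<in>M. b x = 0"
  using irr2[OF M a b] a0 ab by auto

definition mm :: "(nat \<Rightarrow> 'p \<Rightarrow> complex) \<Rightarrow> 'p list \<Rightarrow> nat list \<Rightarrow> complex mat" where
  "mm E ys ks = mat (length ks) (length ys) (\<lambda>(i,j). E (ks!i) (ys!j))"

definition Nmc :: "(nat \<Rightarrow> 'p \<Rightarrow> complex) \<Rightarrow> 'p list \<Rightarrow> nat list \<Rightarrow> nat \<Rightarrow> nat \<Rightarrow> complex" where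
  "Nmc E ys ks k j = (\<Sum>i<length ys. E k (ys!i) * adj_mat (mm E ys ks) $$ (i,j))"

lemma mm_carrier: "length ys = r \<Longrightarrow> length ks = r \<Longrightarrow> mm E ys ks \<in> carrier_mat r r"
  unfolding mm_def by auto

lemma cramer_row:
  assumes len: "length ys = r" "length ks = r"
    and dB: "det (mm E ys ks) \<noteq> 0"
    and d0: "det (mm E (ys @ [y]) (ks @ [k])) = 0"
  shows "E k y * det (mm E ys ks) = (\<Sum>j<r. Nmc E ys ks k j * E (ks!j) y)"
proof -
  define B where "B = mm E ys ks"
  define U where "U = mat r 1 (\<lambda>(i,_). E (ks!i) y)"
  define W where "W = mat 1 r (\<lambda>(_,j). E k (ys!j))"
  define Ee where "Ee = mat 1 1 (\<lambda>_. E k y)"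
  define Tt where "Tt = - (adj_mat B * U)"
  define D1 where "D1 = mat 1 1 (\<lambda>_. det B)"
  define T where "T = four_block_mat (1\<^sub>m r) Tt (0\<^sub>m 1 r) D1"
  have B: "B \<in> carrier_mat r r" unfolding B_def using len by (rule mm_carrier)
  have U: "U \<in> carrier_mat r 1" and W: "W \<in> carrier_mat 1 r" and Ee: "Ee \<in> carrier_mat 1 1"
    and D1: "D1 \<in> carrier_mat 1 1" unfolding U_def W_def Ee_def D1_def by auto
  have aB: "adj_mat B \<in> carrier_mat r r" "B * adj_mat B = det B \<cdot>\<^sub>m 1\<^sub>m r" using adj_mat[OF B] by auto
  have Tt: "Tt \<in> carrier_mat r 1" unfolding Tt_def using aB U by auto
  have Mf: "mm E (ys @ [y]) (ks @ [k]) = four_block_mat B U W Ee"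
    by (rule eq_matI) (use len in \<open>auto simp: mm_def B_def U_def W_def Ee_def nth_append\<close>)
  have T: "T \<in> carrier_mat (r+1) (r+1)" unfolding T_def using Tt D1 by auto
  have Mfc: "four_block_mat B U W Ee \<in> carrier_mat (r+1) (r+1)" using B U W Ee by auto
  have prod: "four_block_mat B U W Ee * T = four_block_mat (B * 1\<^sub>m r + U * 0\<^sub>m 1 r) (B * Tt + U * D1)
      (W * 1\<^sub>m r + Ee * 0\<^sub>m 1 r) (W * Tt + Ee * D1)"
    unfolding T_def by (rule mult_four_block_mat[OF B U W Ee]) (use Tt D1 in auto)
  have b1: "B * 1\<^sub>m r + U * 0\<^sub>m 1 r = B" using B U by auto
  have b3: "W * 1\<^sub>m r + Ee * 0\<^sub>m 1 r = W" using W Ee by auto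
  have b2: "B * Tt + U * D1 = 0\<^sub>m r 1"
  proof -
    have "B * Tt = - ((B * adj_mat B) * U)" unfolding Tt_def using B aB U
      by (simp add: assoc_mult_mat[symmetric, of B r r "adj_mat B" r U 1])
    also have "\<dots> = - (det B \<cdot>\<^sub>m U)" using aB U
      by (simp add: mult_smult_assoc_mat[of "1\<^sub>m r" r r U 1])
    finally have 1: "B * Tt = - (det B \<cdot>\<^sub>m U)" .
    have 2: "U * D1 = det B \<cdot>\<^sub>m U"
      by (rule eq_matI) (auto simp: U_def D1_def scalar_prod_def)
    show ?thesis unfolding 1 2 by (rule eq_matI) (use U in auto)
  qed
  define X where "X = W * Tt + Ee * D1"
  have X: "X \<in> carrier_mat 1 1" unfolding X_def using W Tt Ee D1 by auto
  have X00: "X $$ (0,0) = E k y * det B - (\<Sum>j<r. Nmc E ys ks k j * E (ks!j) y)"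
  proof -
    have "(W * Tt) $$ (0,0) = - (\<Sum>i<r. E k (ys!i) * (\<Sum>j<r. adj_mat B $$ (i,j) * E (ks!j) y))"
      unfolding Tt_def using aB U W
      by (auto simp: scalar_prod_def W_def U_def sum_negf atLeast0LessThan intro!: sum.cong)
    also have "\<dots> = - (\<Sum>j<r. Nmc E ys ks k j * E (ks!j) y)"
      unfolding Nmc_def B_def len sum_distrib_left sum_distrib_right
      by (subst sum.swap) (simp add: ac_simps)
    finally have "(W * Tt) $$ (0,0) = - (\<Sum>j<r. Nmc E ys ks k j * E (ks!j) y)" .
    moreover have "(Ee * D1) $$ (0,0) = E k y * det B" by (simp add: Ee_def D1_def scalar_prod_def)
    ultimately show ?thesis unfolding X_def using W Tt Ee D1 by simp
  qed
  have "det (four_block_mat B U W Ee * T) = det (four_block_mat B U W Ee) * det T"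
    by (rule det_mult[OF Mfc T])
  also have "det (four_block_mat B U W Ee) = 0" using d0 Mf by simp
  finally have 0: "det (four_block_mat B U W Ee * T) = 0" by simp
  have "det (four_block_mat B U W Ee * T) = det B * det X"
    unfolding prod b1 b2 b3 X_def[symmetric]
    by (rule det_four_block_mat_upper_right_zero[OF B refl W X])
  with 0 have "det X = 0" using dB B_def by simp
  then have "X $$ (0,0) = 0" using det_single[OF X] by simp
  then show ?thesis using X00 B_def by simp
qed

lemma row_zero:
  assumes B: "B \<in> carrier_mat r r" and dB: "det B \<noteq> 0"
    and b: "\<And>i. i < r \<Longrightarrow> (\<Sum>j<r. b j * B $$ (j,i)) = (0::complex)"
    and j: "j < r"
  shows "b j = 0"
proof -
  have aB: "adj_mat B \<in> carrier_mat r r" "B * adj_mat B = det B \<cdot>\<^sub>m 1\<^sub>m r" using adj_mat[OF B] by auto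
  have "(\<Sum>i<r. (\<Sum>l<r. b l * B $$ (l,i)) * adj_mat B $$ (i,j)) = 0" using b by simp
  moreover have "(\<Sum>i<r. (\<Sum>l<r. b l * B $$ (l,i)) * adj_mat B $$ (i,j))
      = (\<Sum>l<r. b l * (B * adj_mat B) $$ (l,j))"
    using aB(1) B j unfolding sum_distrib_right sum_distrib_left
    by (subst sum.swap) (auto simp: scalar_prod_def atLeast0LessThan ac_simps sum_distrib_left intro!: sum.cong)
  moreover have "(\<Sum>l<r. b l * (B * adj_mat B) $$ (l,j)) = b j * det B"
  proof -
    have e: "\<And>l. l<r \<Longrightarrow> (B * adj_mat B) $$ (l,j) = (if l = j then det B else 0)"
      using aB(2) j by simp
    have "(\<Sum>l<r. b l * (B * adj_mat B) $$ (l,j)) = (\<Sum>l<r. if l = j then b j * det B else 0)"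
      by (rule sum.cong) (auto simp: e)
    also have "\<dots> = b j * det B" using j by simp
    finally show ?thesis .
  qed
  ultimately show ?thesis using dB by simp
qed

lemma lin_dep:
  fixes v :: "'t \<Rightarrow> 'a \<Rightarrow> complex"
  assumes "finite F" "finite T" "card F < card T"
  shows "\<exists>l. (\<exists>t\<in>T. l t \<noteq> 0) \<and> (\<forall>\<alpha>\<in>F. (\<Sum>t\<in>T. l t * v t \<alpha>) = 0)"
  using assms
proof (induction F arbitrary: T v rule: finite_induct)
  case empty
  then obtain t0 where "t0 \<in> T" by (metis card.empty card_gt_0_iff ex_in_conv)
  then show ?case by (intro exI[of _ "\<lambda>t. if t = t0 then 1 else 0"]) auto
next
  case (insert a F)
  show ?case
  proof (cases "\<forall>t\<in>T. v t a = 0")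
    case True
    from insert.IH[of T v] insert.prems insert.hyps obtain l where
      l: "\<exists>t\<in>T. l t \<noteq> 0" "\<forall>\<alpha>\<in>F. (\<Sum>t\<in>T. l t * v t \<alpha>) = 0" by auto
    then show ?thesis using True by (intro exI[of _ l]) auto
  next
    case False
    then obtain t0 where t0: "t0 \<in> T" "v t0 a \<noteq> 0" by auto
    define T' where "T' = T - {t0}"
    define w where "w = (\<lambda>t b. v t b - (v t a / v t0 a) * v t0 b)"
    have cT': "card F < card T'" unfolding T'_def using insert t0 by (simp add: card_Diff_singleton)
    from insert.IH[of T' w] cT' insert.prems obtain m where
      m: "\<exists>t\<in>T'. m t \<noteq> 0" "\<forall>\<alpha>\<in>F. (\<Sum>t\<in>T'. m t * w t \<alpha>) = 0" unfolding T'_def by auto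
    define l where "l = (\<lambda>t. if t = t0 then - (\<Sum>s\<in>T'. m s * v s a) / v t0 a else m t)"
    have fT: "finite T'" unfolding T'_def using insert by auto
    have split: "(\<Sum>t\<in>T. l t * v t b) = l t0 * v t0 b + (\<Sum>t\<in>T'. m t * v t b)" for b
    proof -
      have "T = insert t0 T'" "t0 \<notin> T'" unfolding T'_def using t0 by auto
      then have "(\<Sum>t\<in>T. l t * v t b) = l t0 * v t0 b + (\<Sum>t\<in>T'. l t * v t b)"
        using fT by simp
      also have "(\<Sum>t\<in>T'. l t * v t b) = (\<Sum>t\<in>T'. m t * v t b)"
        by (rule sum.cong) (auto simp: l_def T'_def)
      finally show ?thesis .
    qed
    have "\<forall>\<alpha>\<in>insert a F. (\<Sum>t\<in>T. l t * v t \<alpha>) = 0"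
    proof
      fix b assume b: "b \<in> insert a F"
      show "(\<Sum>t\<in>T. l t * v t b) = 0"
      proof (cases "b = a")
        case True
        then show ?thesis unfolding split using t0 by (simp add: l_def)
      next
        case False
        then have bF: "b \<in> F" using b by auto
        have "0 = (\<Sum>t\<in>T'. m t * w t b)" using m bF by auto
        also have "\<dots> = (\<Sum>t\<in>T'. m t * v t b) - (\<Sum>t\<in>T'. m t * v t a) / v t0 a * v t0 b"
          unfolding w_def right_diff_distrib sum_subtractf
          by (simp add: sum_distrib_right sum_divide_distrib sum_distrib_left mult_ac)
        finally show ?thesis unfolding split using t0 by (simp add: l_def algebra_simps)
      qed
    qed
    moreover have "\<exists>t\<in>T. l t \<noteq> 0" using m unfolding l_def T'_def by auto
    ultimately show ?thesis by blast
  qed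
qed

lemma fiber_infinite:
  fixes f :: "complex \<Rightarrow> 'b"
  assumes "countable (range f)"
  shows "\<exists>b. infinite {c. f c = b}"
proof (rule ccontr)
  assume "\<not> ?thesis"
  then have fin: "\<And>b. finite {c. f c = b}" by auto
  have "UNIV = (\<Union>b\<in>range f. {c. f c = b})" by auto
  moreover have "countable (\<Union>b\<in>range f. {c. f c = b})"
    using assms fin by (intro countable_UN) (auto intro: countable_finite)
  ultimately show False using uncountable_UNIV_complex by simp
qed

lemma pf_poly1: "(\<lambda>x. poly g (x i)) \<in> poly_funs"
proof (induction g)
  case 0 then show ?case by (simp add: pf_const)
next
  case (pCons a p)
  have "(\<lambda>x. (\<lambda>x. a) x + (\<lambda>x. x i) x * (\<lambda>x. poly p (x i)) x) \<in> poly_funs"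
    by (intro pf_add pf_mult pf_const pf_var pCons)
  then show ?case by simp
qed

definition pideal :: "(('n::finite \<Rightarrow> complex) \<Rightarrow> complex) set \<Rightarrow> bool" where
  "pideal J \<longleftrightarrow> J \<subseteq> poly_funs \<and> (\<forall>a\<in>J. \<forall>b\<in>J. (\<lambda>x. a x + b x) \<in> J) \<and>
     (\<forall>a\<in>J. \<forall>p\<in>poly_funs. (\<lambda>x. p x * a x) \<in> J)"

lemma pidealD:
  "pideal J \<Longrightarrow> J \<subseteq> poly_funs"
  "pideal J \<Longrightarrow> a \<in> J \<Longrightarrow> b \<in> J \<Longrightarrow> (\<lambda>x. a x + b x) \<in> J"
  "pideal J \<Longrightarrow> a \<in> J \<Longrightarrow> p \<in> poly_funs \<Longrightarrow> (\<lambda>x. p x * a x) \<in> J"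
  unfolding pideal_def by auto

lemma pideal_sum:
  assumes J: "pideal J" and z: "(\<lambda>x. 0) \<in> J"
  shows "finite T \<Longrightarrow> (\<And>c. c \<in> T \<Longrightarrow> p c \<in> poly_funs) \<Longrightarrow> (\<And>c. c \<in> T \<Longrightarrow> q c \<in> J) \<Longrightarrow>
    (\<lambda>x. \<Sum>c\<in>T. p c x * q c x) \<in> J"
proof (induction T rule: finite_induct)
  case empty then show ?case using z by simp
next
  case (insert c T)
  have add: "\<And>a b. a \<in> J \<Longrightarrow> b \<in> J \<Longrightarrow> (\<lambda>x. a x + b x) \<in> J"
    and mul: "\<And>a p. a \<in> J \<Longrightarrow> p \<in> poly_funs \<Longrightarrow> (\<lambda>x. p x * a x) \<in> J"
    using J unfolding pideal_def by auto
  have "(\<lambda>x. (\<lambda>x. p c x * q c x) x + (\<lambda>x. \<Sum>c\<in>T. p c x * q c x) x) \<in> J"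
    by (rule add) (use insert mul in auto)
  then show ?case using insert by simp
qed

lemma prod_list_pf: fixes h :: "nat \<Rightarrow> ('n::finite \<Rightarrow> complex) \<Rightarrow> complex" shows "(\<And>d. h d \<in> poly_funs) \<Longrightarrow> (\<lambda>x. prod_list (map (\<lambda>d. h d x) ds)) \<in> poly_funs"
proof (induction ds)
  case Nil then show ?case by (simp add: pf_const)
next
  case (Cons d ds)
  then have "(\<lambda>x. h d x * (\<lambda>x. prod_list (map (\<lambda>d. h d x) ds)) x) \<in> poly_funs"
    by (intro pf_mult) (auto simp: eta_contract_eq)
  then show ?case by simp
qed

lemma prod_list_nz:
  fixes h :: "nat \<Rightarrow> ('n::finite \<Rightarrow> complex) \<Rightarrow> complex" and ds :: "nat list"
  assumes M: "irreducible_affine_variety M" and h: "\<And>d. h d \<in> poly_funs"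
    and hz: "\<And>d. \<exists>x\<in>M. h d x \<noteq> 0"
  shows "\<exists>x\<in>M. prod_list (map (\<lambda>d. h d x) ds) \<noteq> 0"
proof (induction ds)
  case Nil
  from M have "M \<noteq> {}" unfolding irreducible_affine_variety_def by auto
  then show ?case by auto
next
  case (Cons d ds)
  then show ?case using irr_mult[OF M h[of d] prod_list_pf[OF h, where ds=ds]] hz[of d] by simp
qed

lemma lemmaU:
  fixes M :: "('n::finite \<Rightarrow> complex) set" and h :: "nat \<Rightarrow> ('n \<Rightarrow> complex) \<Rightarrow> complex"
  assumes M: "irreducible_affine_variety M" and h: "\<And>d::nat. h d \<in> poly_funs"
    and hz: "\<And>d. \<exists>x\<in>M. h d x \<noteq> 0"
  shows "\<exists>x\<in>M. \<forall>d. h d x \<noteq> 0"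
proof -
  define S where "S = range (\<lambda>ds. (\<lambda>x::'n\<Rightarrow>complex. prod_list (map (\<lambda>d. h d x) ds)))"
  have S_pf: "s \<in> S \<Longrightarrow> s \<in> poly_funs" for s unfolding S_def using prod_list_pf[OF h] by auto
  have S_nz: "s \<in> S \<Longrightarrow> \<exists>x\<in>M. s x \<noteq> 0" for s unfolding S_def using prod_list_nz[OF M h hz] by auto
  have S_1: "(\<lambda>x. 1) \<in> S" unfolding S_def by (auto intro!: image_eqI[of _ _ "[]"])
  have S_h: "h d \<in> S" for d unfolding S_def by (auto intro!: image_eqI[of _ _ "[d]"])
  have S_mult: "s1 \<in> S \<Longrightarrow> s2 \<in> S \<Longrightarrow> (\<lambda>x. s1 x * s2 x) \<in> S" for s1 s2
  proof -
    assume "s1 \<in> S" "s2 \<in> S"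
    then obtain d1 d2 where "s1 = (\<lambda>x. prod_list (map (\<lambda>d. h d x) d1))"
      "s2 = (\<lambda>x. prod_list (map (\<lambda>d. h d x) d2))" unfolding S_def by auto
    then show ?thesis unfolding S_def by (auto intro!: image_eqI[of _ _ "d1 @ d2"])
  qed
  have S_count: "countable S" unfolding S_def by simp
  define I0 where "I0 = {f\<in>poly_funs. \<forall>x\<in>M. f x = 0}"
  define A where "A = {J. pideal J \<and> I0 \<subseteq> J \<and> J \<inter> S = {}}"
  have I0: "I0 \<in> A"
  proof -
    have 1: "I0 \<subseteq> poly_funs" by (auto simp: I0_def)
    have 2: "\<forall>a\<in>I0. \<forall>b\<in>I0. (\<lambda>x. a x + b x) \<in> I0"
      unfolding I0_def by (auto intro!: pf_add)
    have 3: "\<forall>a\<in>I0. \<forall>p\<in>poly_funs. (\<lambda>x. p x * a x) \<in> I0"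
      unfolding I0_def by (auto intro!: pf_mult)
    have 4: "I0 \<inter> S = {}" unfolding I0_def using S_nz by fastforce
    show ?thesis unfolding A_def pideal_def using 1 2 3 4 by blast
  qed
  have "\<exists>Q\<in>A. \<forall>X\<in>A. Q \<subseteq> X \<longrightarrow> X = Q"
  proof (rule subset_Zorn_nonempty)
    show "A \<noteq> {}" using I0 by auto
  next
    fix C assume C: "C \<noteq> {}" "subset.chain A C"
    then have CA: "C \<subseteq> A" and tot: "\<And>X Y. X \<in> C \<Longrightarrow> Y \<in> C \<Longrightarrow> X \<subseteq> Y \<or> Y \<subseteq> X"
      by (auto simp: subset_chain_def)
    have "pideal (\<Union>C)"
      unfolding pideal_def
    proof (intro conjI ballI)
      show "\<Union>C \<subseteq> poly_funs" using CA pidealD(1) unfolding A_def by blast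
    next
      fix a b :: "('n \<Rightarrow> complex) \<Rightarrow> complex" assume "a \<in> \<Union>C" "b \<in> \<Union>C"
      then obtain X Y where XY: "X \<in> C" "Y \<in> C" "a \<in> X" "b \<in> Y" by auto
      show "(\<lambda>x. a x + b x) \<in> \<Union>C"
      proof (cases "X \<subseteq> Y")
        case True
        then have "(\<lambda>x. a x + b x) \<in> Y" using XY CA pidealD(2)[of Y a b] unfolding A_def by blast
        then show ?thesis using XY by auto
      next
        case False
        then have "Y \<subseteq> X" using tot XY by blast
        then have "(\<lambda>x. a x + b x) \<in> X" using XY CA pidealD(2)[of X a b] unfolding A_def by blast
        then show ?thesis using XY by auto
      qed
    next
      fix a p :: "('n \<Rightarrow> complex) \<Rightarrow> complex" assume "a \<in> \<Union>C" "p \<in> poly_funs"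
      then obtain X where "X \<in> C" "a \<in> X" by auto
      then have "(\<lambda>x. p x * a x) \<in> X" using \<open>p \<in> poly_funs\<close> CA pidealD(3)[of X a p] unfolding A_def by blast
      then show "(\<lambda>x. p x * a x) \<in> \<Union>C" using \<open>X \<in> C\<close> by auto
    qed
    moreover have "I0 \<subseteq> \<Union>C" using C CA unfolding A_def by blast
    moreover have "\<Union>C \<inter> S = {}" using CA unfolding A_def by blast
    ultimately show "\<Union>C \<in> A" unfolding A_def by blast
  qed
  then obtain Q where QA: "Q \<in> A" and Qmax: "\<And>X. X \<in> A \<Longrightarrow> Q \<subseteq> X \<Longrightarrow> X = Q" by blast
  have Qi: "pideal Q" and I0Q: "I0 \<subseteq> Q" and QS: "Q \<inter> S = {}" using QA unfolding A_def by auto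
  have Qpf: "Q \<subseteq> poly_funs" using Qi by (rule pidealD(1))
  have Qadd: "a \<in> Q \<Longrightarrow> b \<in> Q \<Longrightarrow> (\<lambda>x. a x + b x) \<in> Q" for a b using Qi by (rule pidealD(2))
  have Qmul: "a \<in> Q \<Longrightarrow> p \<in> poly_funs \<Longrightarrow> (\<lambda>x. p x * a x) \<in> Q" for a p using Qi by (rule pidealD(3))
  have Q0: "(\<lambda>x. 0) \<in> Q" using I0Q unfolding I0_def by (auto intro: pf_const)
  have Qneg: "a \<in> Q \<Longrightarrow> (\<lambda>x. - a x) \<in> Q" for a using Qmul[of a "\<lambda>x. -1"] by (simp add: pf_const)
  have Qdiff: "a \<in> Q \<Longrightarrow> b \<in> Q \<Longrightarrow> (\<lambda>x. a x - b x) \<in> Q" for a b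
    using Qadd[of a "\<lambda>x. - b x"] Qneg[of b] by simp
  have ext: "\<exists>s\<in>S. \<exists>q\<in>Q. \<exists>b\<in>poly_funs. s = (\<lambda>x. q x + b x * a x)"
    if a: "a \<in> poly_funs" "a \<notin> Q" for a :: "('n \<Rightarrow> complex) \<Rightarrow> complex"
  proof -
    define J where "J = {f. \<exists>q\<in>Q. \<exists>b\<in>poly_funs. f = (\<lambda>x. q x + b x * a x)}"
    have "pideal J" unfolding pideal_def
    proof (intro conjI ballI)
      show "J \<subseteq> poly_funs" unfolding J_def using Qpf a by (auto intro!: pf_add pf_mult)
    next
      fix f g :: "('n \<Rightarrow> complex) \<Rightarrow> complex" assume "f \<in> J" "g \<in> J"
      then obtain q1 b1 q2 b2 where "q1 \<in> Q" "b1 \<in> poly_funs" "f = (\<lambda>x. q1 x + b1 x * a x)"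
        "q2 \<in> Q" "b2 \<in> poly_funs" "g = (\<lambda>x. q2 x + b2 x * a x)" unfolding J_def by blast
      then show "(\<lambda>x. f x + g x) \<in> J" unfolding J_def
        by (intro CollectI bexI[of _ "\<lambda>x. q1 x + q2 x"] bexI[of _ "\<lambda>x. b1 x + b2 x"])
          (auto simp: algebra_simps intro: Qadd pf_add)
    next
      fix f p :: "('n \<Rightarrow> complex) \<Rightarrow> complex" assume "f \<in> J" "p \<in> poly_funs"
      then obtain q1 b1 where "q1 \<in> Q" "b1 \<in> poly_funs" "f = (\<lambda>x. q1 x + b1 x * a x)"
        unfolding J_def by blast
      then show "(\<lambda>x. p x * f x) \<in> J" unfolding J_def using \<open>p \<in> poly_funs\<close>
        by (intro CollectI bexI[of _ "\<lambda>x. p x * q1 x"] bexI[of _ "\<lambda>x. p x * b1 x"])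
          (auto simp: algebra_simps intro: Qmul pf_mult)
    qed
    moreover have QJ: "Q \<subseteq> J"
    proof
      fix q assume "q \<in> Q"
      then show "q \<in> J" unfolding J_def
        by (intro CollectI bexI[of _ q] bexI[of _ "\<lambda>x. 0"]) (auto intro: pf_const)
    qed
    moreover have "a \<in> J" unfolding J_def
      by (intro CollectI bexI[of _ "\<lambda>x. 0"] bexI[of _ "\<lambda>x. 1"]) (auto intro: pf_const Q0)
    ultimately have "J \<notin> A" using Qmax[of J] a by auto
    then have "J \<inter> S \<noteq> {}" using \<open>pideal J\<close> QJ I0Q unfolding A_def by auto
    then show ?thesis unfolding J_def by blast
  qed
  have prime: "a \<in> Q \<or> b \<in> Q" if ab: "a \<in> poly_funs" "b \<in> poly_funs" "(\<lambda>x. a x * b x) \<in> Q" for a b :: "('n \<Rightarrow> complex) \<Rightarrow> complex"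
  proof (rule ccontr)
    assume "\<not> ?thesis"
    then have na: "a \<notin> Q" and nb: "b \<notin> Q" by auto
    obtain s1 q1 c1 where 1: "s1 \<in> S" "q1 \<in> Q" "c1 \<in> poly_funs" "s1 = (\<lambda>x. q1 x + c1 x * a x)"
      using ext[OF ab(1) na] by blast
    obtain s2 q2 c2 where 2: "s2 \<in> S" "q2 \<in> Q" "c2 \<in> poly_funs" "s2 = (\<lambda>x. q2 x + c2 x * b x)"
      using ext[OF ab(2) nb] by blast
    have "(\<lambda>x. (\<lambda>x. s2 x * q1 x) x + ((\<lambda>x. (c1 x * a x) * q2 x) x + (\<lambda>x. (c1 x * c2 x) * (a x * b x)) x)) \<in> Q"
    proof -
      have t1: "(\<lambda>x. s2 x * q1 x) \<in> Q" using Qmul[OF 1(2) S_pf[OF 2(1)]] .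
      have "(\<lambda>x. c1 x * a x) \<in> poly_funs" using 1(3) ab(1) by (rule pf_mult)
      then have t2: "(\<lambda>x. (c1 x * a x) * q2 x) \<in> Q" using Qmul[OF 2(2)] by blast
      have "(\<lambda>x. c1 x * c2 x) \<in> poly_funs" using 1(3) 2(3) by (rule pf_mult)
      then have t3: "(\<lambda>x. (c1 x * c2 x) * (a x * b x)) \<in> Q" using Qmul[OF ab(3)] by blast
      show ?thesis using Qadd[OF t1 Qadd[OF t2 t3]] .
    qed
    moreover have "(\<lambda>x. s1 x * s2 x) = (\<lambda>x. (\<lambda>x. s2 x * q1 x) x + ((\<lambda>x. (c1 x * a x) * q2 x) x + (\<lambda>x. (c1 x * c2 x) * (a x * b x)) x))"
      unfolding 1(4) 2(4) by (auto simp: algebra_simps)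
    ultimately have "(\<lambda>x. s1 x * s2 x) \<in> Q" by simp
    moreover have "(\<lambda>x. s1 x * s2 x) \<in> S" using S_mult 1 2 by auto
    ultimately show False using QS by auto
  qed
  have const: "c = 0" if "(\<lambda>x. c) \<in> Q" for c
  proof (rule ccontr)
    assume "c \<noteq> 0"
    then have "(\<lambda>x. 1) = (\<lambda>x. (\<lambda>x. inverse c) x * (\<lambda>x. c) x)" by auto
    also have "\<dots> \<in> Q" using that by (intro Qmul pf_const)
    finally show False using S_1 QS by auto
  qed
  have univ: "\<exists>r. (\<lambda>x. x i - r) \<in> Q" if "g \<noteq> 0" "(\<lambda>x. poly g (x i)) \<in> Q" for g :: "complex poly" and i
    using that
  proof (induction "degree g" arbitrary: g rule: less_induct)
    case less
    show ?case
    proof (cases "degree g = 0")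
      case True
      then obtain c where "g = [:c:]" by (metis degree_eq_zeroE)
      then show ?thesis using less.prems const by auto
    next
      case False
      then have "\<not> constant (poly g)" by (simp add: constant_degree)
      then obtain r where "poly g r = 0" using fundamental_theorem_of_algebra by blast
      then obtain g' where g': "g = [:-r, 1:] * g'" by (metis dvdE poly_eq_0_iff_dvd)
      have g'0: "g' \<noteq> 0" using less.prems g' by auto
      have "degree g = degree [:-r, 1:] + degree g'" unfolding g' by (rule degree_mult_eq) (use g'0 in auto)
      then have "degree g = Suc (degree g')" by simp
      then have dlt: "degree g' < degree g" by simp
      have "(\<lambda>x. (\<lambda>x. x i - r) x * (\<lambda>x. poly g' (x i)) x) \<in> Q"
        using less.prems g' by (simp add: algebra_simps)
      then have "(\<lambda>x. x i - r) \<in> Q \<or> (\<lambda>x. poly g' (x i)) \<in> Q"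
        by (intro prime) (auto intro: pf_minus pf_var pf_const pf_poly1)
      then show ?thesis using less.hyps[OF dlt g'0] by blast
    qed
  qed
  have coord: "\<exists>r. (\<lambda>x. x i - r) \<in> Q" for i
  proof (rule ccontr)
    assume nQ: "\<not> ?thesis"
    have "\<forall>c. \<exists>t. fst t \<in> S \<and> fst (snd t) \<in> Q \<and> snd (snd t) \<in> poly_funs \<and>
       fst t = (\<lambda>x. fst (snd t) x + snd (snd t) x * (x i - c))"
    proof
      fix c
      have "(\<lambda>x. x i - c) \<in> poly_funs" by (intro pf_minus pf_var pf_const)
      then obtain s q b where "s \<in> S" "q \<in> Q" "b \<in> poly_funs" "s = (\<lambda>x. q x + b x * (x i - c))"
        using ext[of "\<lambda>x. x i - c"] nQ by blast
      then show "\<exists>t. fst t \<in> S \<and> fst (snd t) \<in> Q \<and> snd (snd t) \<in> poly_funs \<and>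
       fst t = (\<lambda>x. fst (snd t) x + snd (snd t) x * (x i - c))" by (intro exI[of _ "(s,q,b)"]) simp
    qed
    then obtain tf where tf: "\<forall>c. fst (tf c) \<in> S \<and> fst (snd (tf c)) \<in> Q \<and> snd (snd (tf c)) \<in> poly_funs \<and>
       fst (tf c) = (\<lambda>x. fst (snd (tf c)) x + snd (snd (tf c)) x * (x i - c))"
      using choice[of "\<lambda>c t. fst t \<in> S \<and> fst (snd t) \<in> Q \<and> snd (snd t) \<in> poly_funs \<and>
       fst t = (\<lambda>x. fst (snd t) x + snd (snd t) x * (x i - c))"] by blast
    define sf where "sf c = fst (tf c)" for c
    define qf where "qf c = fst (snd (tf c))" for c
    define bf where "bf c = snd (snd (tf c))" for c
    have sqb: "\<And>c. sf c \<in> S \<and> qf c \<in> Q \<and> bf c \<in> poly_funs \<and>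
        sf c = (\<lambda>x. qf c x + bf c x * (x i - c))" using tf unfolding sf_def qf_def bf_def by blast
    have sfS: "sf c \<in> S" and qfQ: "qf c \<in> Q" and bfp: "bf c \<in> poly_funs" for c using sqb by blast+
    have "\<forall>c. \<exists>t. \<forall>x. bf c x = (\<Sum>\<alpha>\<in>Mon (fst t). snd t \<alpha> * monom_fn \<alpha> x)"
    proof
      fix c
      obtain D cf where "\<forall>x. bf c x = (\<Sum>\<alpha>\<in>Mon D. cf \<alpha> * monom_fn \<alpha> x)" using pf_rep bfp by blast
      then show "\<exists>t. \<forall>x. bf c x = (\<Sum>\<alpha>\<in>Mon (fst t). snd t \<alpha> * monom_fn \<alpha> x)"
        by (intro exI[of _ "(D, cf)"]) simp
    qed
    then obtain tD where tD: "\<forall>c. \<forall>x. bf c x = (\<Sum>\<alpha>\<in>Mon (fst (tD c)). snd (tD c) \<alpha> * monom_fn \<alpha> x)"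
      using choice[of "\<lambda>c t. \<forall>x. bf c x = (\<Sum>\<alpha>\<in>Mon (fst t). snd t \<alpha> * monom_fn \<alpha> x)"] by blast
    define Df where "Df c = fst (tD c)" for c
    define cf where "cf c = snd (tD c)" for c
    have rep: "\<And>c x. bf c x = (\<Sum>\<alpha>\<in>Mon (Df c). cf c \<alpha> * monom_fn \<alpha> x)"
      using tD unfolding Df_def cf_def by blast
    have "countable (range (\<lambda>c. (sf c, Df c)))"
    proof (rule countable_subset)
      show "range (\<lambda>c. (sf c, Df c)) \<subseteq> S \<times> UNIV" using sfS by auto
      show "countable (S \<times> (UNIV :: nat set))" using S_count by simp
    qed
    then obtain sD where inf: "infinite {c. (sf c, Df c) = sD}" using fiber_infinite by blast
    obtain s0 D0 where sD: "sD = (s0, D0)" by fastforce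
    define m where "m = card (Mon D0 :: ('n \<Rightarrow> nat) set)"
    obtain T where T: "finite T" "card T = Suc m" "T \<subseteq> {c. (sf c, Df c) = sD}"
      using infinite_arbitrarily_large[OF inf] by blast
    have Tc: "c \<in> T \<Longrightarrow> sf c = s0 \<and> Df c = D0" for c using T sD by auto
    obtain l where l: "\<exists>t\<in>T. l t \<noteq> 0" "\<forall>\<alpha>\<in>Mon D0. (\<Sum>t\<in>T. l t * cf t \<alpha>) = 0"
      using lin_dep[of "Mon D0" T cf] T finite_Mon m_def by auto
    have lb: "(\<Sum>c\<in>T. l c * bf c x) = 0" for x
    proof -
      have "(\<Sum>c\<in>T. l c * bf c x) = (\<Sum>c\<in>T. \<Sum>\<alpha>\<in>Mon D0. l c * cf c \<alpha> * monom_fn \<alpha> x)"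
        by (rule sum.cong) (auto simp: rep Tc sum_distrib_left mult_ac)
      also have "\<dots> = (\<Sum>\<alpha>\<in>Mon D0. (\<Sum>c\<in>T. l c * cf c \<alpha>) * monom_fn \<alpha> x)"
        by (subst sum.swap) (simp add: sum_distrib_right)
      also have "\<dots> = 0" using l by simp
      finally show ?thesis .
    qed
    define g where "g = (\<Sum>c\<in>T. smult (l c) (\<Prod>t\<in>T - {c}. [:-t, 1:]))"
    have polyg: "poly g z = (\<Sum>c\<in>T. l c * (\<Prod>t\<in>T - {c}. z - t))" for z
      unfolding g_def by (simp add: poly_sum poly_prod)
    obtain c0 where c0: "c0 \<in> T" "l c0 \<noteq> 0" using l by auto
    have "poly g c0 = l c0 * (\<Prod>t\<in>T - {c0}. c0 - t)"
    proof -
      have "poly g c0 = (\<Sum>c\<in>T. if c = c0 then l c0 * (\<Prod>t\<in>T - {c0}. c0 - t) else 0)"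
        unfolding polyg using T(1) c0 by (intro sum.cong refl) (auto simp: prod_zero_iff)
      then show ?thesis using c0 T(1) by simp
    qed
    also have "\<dots> \<noteq> 0" using c0 T(1) by (simp add: prod_zero_iff)
    finally have g0: "g \<noteq> 0" by auto
    have key: "(\<lambda>x. s0 x * poly g (x i)) = (\<lambda>x. \<Sum>c\<in>T. (l c * (\<Prod>t\<in>T - {c}. x i - t)) * qf c x)"
    proof
      fix x
      have "s0 x * poly g (x i) = (\<Sum>c\<in>T. l c * (\<Prod>t\<in>T - {c}. x i - t) * sf c x)"
        unfolding polyg sum_distrib_left by (rule sum.cong) (auto simp: Tc)
      also have "\<dots> = (\<Sum>c\<in>T. l c * (\<Prod>t\<in>T - {c}. x i - t) * qf c x +
          (\<Prod>t\<in>T. x i - t) * (l c * bf c x))"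
      proof (rule sum.cong[OF refl])
        fix c assume c: "c \<in> T"
        define P' where "P' = (\<Prod>t\<in>T - {c}. x i - t)"
        have pall: "(\<Prod>t\<in>T. x i - t) = (x i - c) * P'"
          unfolding P'_def using c T(1) by (simp add: prod.remove)
        have e0: "sf c = (\<lambda>x. qf c x + bf c x * (x i - c))" using sqb[of c] by blast
        have e: "sf c x = qf c x + bf c x * (x i - c)" using fun_cong[OF e0, of x] by simp
        show "l c * (\<Prod>t\<in>T - {c}. x i - t) * sf c x = l c * (\<Prod>t\<in>T - {c}. x i - t) * qf c x +
          (\<Prod>t\<in>T. x i - t) * (l c * bf c x)"
          unfolding P'_def[symmetric] pall e by (simp add: algebra_simps)
      qed
      also have "\<dots> = (\<Sum>c\<in>T. l c * (\<Prod>t\<in>T - {c}. x i - t) * qf c x)"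
        using lb[of x] by (simp add: sum.distrib sum_distrib_left[symmetric])
      finally show "s0 x * poly g (x i) = (\<Sum>c\<in>T. (l c * (\<Prod>t\<in>T - {c}. x i - t)) * qf c x)" .
    qed
    have "(\<lambda>x. \<Sum>c\<in>T. (l c * (\<Prod>t\<in>T - {c}. x i - t)) * qf c x) \<in> Q"
      by (rule pideal_sum[OF Qi Q0 T(1)]) (auto intro!: pf_scale pf_prod pf_minus pf_var pf_const qfQ)
    then have "(\<lambda>x. s0 x * poly g (x i)) \<in> Q" using key by simp
    moreover have s0S: "s0 \<in> S" using sfS Tc c0 by metis
    ultimately have "s0 \<in> Q \<or> (\<lambda>x. poly g (x i)) \<in> Q"
      by (intro prime) (auto intro: S_pf pf_poly1)
    then show False using s0S QS univ[OF g0] nQ by blast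
  qed
  then obtain r where r: "\<forall>i. (\<lambda>x. x i - r i) \<in> Q"
    using choice[of "\<lambda>i c. (\<lambda>x. x i - c) \<in> Q"] by blast
  have all: "(\<lambda>x. p x - p r) \<in> Q" if "p \<in> poly_funs" for p
    using that
  proof (induction rule: poly_funs.induct)
    case (pf_const c) show ?case using Q0 by simp
  next
    case (pf_var i) show ?case using r by blast
  next
    case (pf_add f g)
    have "(\<lambda>x. (\<lambda>x. f x - f r) x + (\<lambda>x. g x - g r) x) \<in> Q" using pf_add by (intro Qadd)
    then show ?case by (simp add: algebra_simps)
  next
    case (pf_mult f g)
    have "(\<lambda>x. (\<lambda>x. g x * (f x - f r)) x + (\<lambda>x. (\<lambda>x. f r) x * (g x - g r)) x) \<in> Q"
      using pf_mult by (intro Qadd Qmul pf_const) auto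
    then show ?case by (simp add: algebra_simps)
  qed
  obtain F where F: "F \<subseteq> poly_funs" "M = {x. \<forall>f\<in>F. f x = 0}"
    using M unfolding irreducible_affine_variety_def zariski_closed_def by blast
  have "r \<in> M"
  proof -
    have "f r = 0" if f: "f \<in> F" for f
    proof -
      have fQ: "f \<in> Q" using I0Q f F unfolding I0_def by auto
      have "(\<lambda>x. f x - (f x - f r)) \<in> Q" using Qdiff[OF fQ all[of f]] f F by auto
      then show ?thesis using const by simp
    qed
    then show ?thesis using F by auto
  qed
  moreover have "h d r \<noteq> 0" for d
  proof
    assume "h d r = 0"
    then have "h d \<in> Q" using all[OF h[of d]] by simp
    then show False using S_h QS by auto
  qed
  ultimately show ?thesis by blast
qed

lemma pf_det:
  assumes F: "\<And>x. F x \<in> carrier_mat n n"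
    and e: "\<And>i j. i < n \<Longrightarrow> j < n \<Longrightarrow> (\<lambda>x. F x $$ (i,j)) \<in> poly_funs"
  shows "(\<lambda>x. det (F x)) \<in> poly_funs"
proof -
  have "(\<lambda>x. det (F x)) = (\<lambda>x. \<Sum>p\<in>{p. p permutes {0..<n}}. signof p * (\<Prod>i = 0..<n. F x $$ (i, p i)))"
    using det_def'[OF F] by auto
  also have "\<dots> \<in> poly_funs"
  proof (rule pf_sum[where f = "\<lambda>p x. signof p * (\<Prod>i = 0..<n. F x $$ (i, p i))"])
    fix p assume p: "p \<in> {p. p permutes {0..<n}}"
    have "(\<lambda>x. \<Prod>i = 0..<n. F x $$ (i, p i)) \<in> poly_funs"
    proof (rule pf_prod[where f = "\<lambda>i x. F x $$ (i, p i)"])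
      fix i assume "i \<in> {0..<n}"
      then have "i < n" "p i < n" using p permutes_in_image[of p "{0..<n}" i] by auto
      then show "(\<lambda>x. F x $$ (i, p i)) \<in> poly_funs" by (rule e)
    qed
    then show "(\<lambda>x. signof p * (\<Prod>i = 0..<n. F x $$ (i, p i))) \<in> poly_funs" by (rule pf_scale)
  qed
  finally show ?thesis .
qed

lemma pf_adj:
  assumes F: "\<And>x. F x \<in> carrier_mat n n"
    and e: "\<And>i j. i < n \<Longrightarrow> j < n \<Longrightarrow> (\<lambda>x. F x $$ (i,j)) \<in> poly_funs"
    and ij: "i < n" "j < n"
  shows "(\<lambda>x. adj_mat (F x) $$ (i,j)) \<in> poly_funs"
proof -
  have eq: "adj_mat (F x) $$ (i,j) = (-1)^(j+i) * det (mat_delete (F x) j i)" for x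
    using F[of x] ij by (simp add: adj_mat_def cofactor_def)
  have "(\<lambda>x. det (mat_delete (F x) j i)) \<in> poly_funs"
  proof (rule pf_det)
    show "mat_delete (F x) j i \<in> carrier_mat (n-1) (n-1)" for x using mat_delete_carrier[OF F[of x]] .
  next
    fix a b assume ab: "a < n - 1" "b < n - 1"
    have "(\<lambda>x. F x $$ (if a < j then a else Suc a, if b < i then b else Suc b)) \<in> poly_funs"
      by (rule e) (use ab in auto)
    moreover have "mat_delete (F x) j i $$ (a, b) = F x $$ (if a < j then a else Suc a, if b < i then b else Suc b)" for x
      using F[of x] ab unfolding mat_delete_def by auto
    ultimately show "(\<lambda>x. mat_delete (F x) j i $$ (a, b)) \<in> poly_funs" by simp
  qed
  then have "(\<lambda>x. (-1)^(j+i) * det (mat_delete (F x) j i)) \<in> poly_funs" by (rule pf_scale)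
  then show ?thesis unfolding eq .
qed

definition enum :: "nat \<Rightarrow> ('n::finite \<Rightarrow> nat) list" where
  "enum d = (SOME xs. distinct xs \<and> set xs = Mon d)"

lemma enum: "distinct (enum d :: ('n::finite \<Rightarrow> nat) list) \<and> set (enum d :: ('n \<Rightarrow> nat) list) = Mon d"
proof -
  have "\<exists>xs. distinct xs \<and> set xs = (Mon d :: ('n \<Rightarrow> nat) set)"
    using finite_distinct_list[OF finite_Mon] by blast
  from someI_ex[OF this] show ?thesis unfolding enum_def .
qed

definition NN :: "nat \<Rightarrow> 'n::finite itself \<Rightarrow> nat" where
  "NN d T = length (enum d :: ('n \<Rightarrow> nat) list)"

definition En :: "nat \<Rightarrow> nat \<Rightarrow> ('n::finite \<Rightarrow> complex) \<Rightarrow> complex" where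
  "En d k y = monom_fn (enum d ! k) y"

lemma En_pf: "(En d k :: ('n::finite \<Rightarrow> complex) \<Rightarrow> complex) \<in> poly_funs"
proof -
  have "(En d k :: ('n \<Rightarrow> complex) \<Rightarrow> complex) = monom_fn (enum d ! k)" by (rule ext) (simp add: En_def)
  then show ?thesis using pf_monom by simp
qed

lemma span:
  fixes f :: "('n::finite \<Rightarrow> complex) \<Rightarrow> complex"
  assumes "f \<in> poly_funs"
  shows "\<exists>d a. \<forall>y. f y = (\<Sum>k<NN d TYPE('n). a k * En d k y)"
proof -
  obtain D c where rep: "\<And>y. f y = (\<Sum>\<alpha>\<in>Mon D. c \<alpha> * monom_fn \<alpha> y)" using pf_rep[OF assms] by blast
  have bij: "bij_betw ((!) (enum D :: ('n \<Rightarrow> nat) list)) {..<NN D TYPE('n)} (Mon D)"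
    by (rule bij_betw_nth) (use enum[of D] in \<open>auto simp: NN_def\<close>)
  have "f y = (\<Sum>k<NN D TYPE('n). c (enum D ! k) * En D k y)" for y
    unfolding rep En_def by (rule sum.reindex_bij_betw[OF bij, symmetric])
  then show ?thesis by (intro exI[of _ D] exI[of _ "\<lambda>k. c (enum D ! k)"]) simp
qed

definition OKd :: "nat \<Rightarrow> ('n::finite \<Rightarrow> complex) list \<Rightarrow> nat list \<Rightarrow> bool" where
  "OKd d ys ks \<longleftrightarrow> length ys = length ks \<and> distinct ks \<and> set ks \<subseteq> {..<NN d TYPE('n)} \<and>
     det (mm (En d) ys ks) \<noteq> 0"

definition MS :: "('n::finite \<Rightarrow> complex) set \<Rightarrow> nat \<Rightarrow> nat set" where
  "MS M d = {length ks | ys ks. set ys \<subseteq> M \<and> OKd d ys ks}"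

definition mM :: "('n::finite \<Rightarrow> complex) set \<Rightarrow> nat \<Rightarrow> nat" where
  "mM M d = Max (MS M d)"

lemma mm_nil: "det (mm E [] []) = 1"
proof -
  have "mm E [] [] = 1\<^sub>m 0" by (rule eq_matI) (auto simp: mm_def)
  then show ?thesis by simp
qed

lemma OKd_nil: "OKd d [] []" unfolding OKd_def by (simp add: mm_nil)

lemma OKd_len:
  fixes ys :: "('n::finite \<Rightarrow> complex) list"
  shows "OKd d ys ks \<Longrightarrow> length ks \<le> NN d TYPE('n)"
proof -
  assume ok: "OKd d ys ks"
  then have "length ks = card (set ks)" using distinct_card unfolding OKd_def by metis
  also have "\<dots> \<le> card {..<NN d TYPE('n)}" using ok unfolding OKd_def by (intro card_mono) auto
  finally show ?thesis by simp
qed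

lemma MS_fin: fixes M :: "('n::finite \<Rightarrow> complex) set" shows "finite (MS M d)"
  by (rule finite_subset[of _ "{..NN d TYPE('n)}"]) (auto simp: MS_def dest: OKd_len)

lemma MS_0: fixes M :: "('n::finite \<Rightarrow> complex) set" shows "0 \<in> MS M d"
  unfolding MS_def
  by (intro CollectI exI[of _ "[] :: ('n\<Rightarrow>complex) list"] exI[of _ "[]::nat list"]) (simp add: OKd_nil)

lemma MS_ne: fixes M :: "('n::finite \<Rightarrow> complex) set" shows "MS M d \<noteq> {}"
  using MS_0 by blast

lemma mM_ge: fixes M :: "('n::finite \<Rightarrow> complex) set" shows "s \<in> MS M d \<Longrightarrow> s \<le> mM M d"
  unfolding mM_def using MS_fin[of M d] by (simp add: Max_ge)

lemma mM_in: fixes M :: "('n::finite \<Rightarrow> complex) set" shows "mM M d \<in> MS M d"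
  unfolding mM_def using MS_fin MS_ne by (rule Max_in)

lemma det0:
  fixes ys :: "('n::finite \<Rightarrow> complex) list"
  assumes ok: "OKd d ys ks" and k: "k < NN d TYPE('n)"
    and c: "k \<in> set ks \<or> \<not> OKd d (ys @ [y]) (ks @ [k])"
  shows "det (mm (En d) (ys @ [y]) (ks @ [k])) = 0"
proof (cases "k \<in> set ks")
  case True
  then obtain i where i: "i < length ks" "ks ! i = k" by (metis in_set_conv_nth)
  let ?A = "mm (En d) (ys @ [y]) (ks @ [k])"
  have len: "length ys = length ks" using ok unfolding OKd_def by auto
  have A: "?A \<in> carrier_mat (Suc (length ks)) (Suc (length ks))" unfolding mm_def using len by auto
  show ?thesis
  proof (rule det_identical_rows[OF A, of i "length ks"])
    show "row ?A i = row ?A (length ks)"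
      by (rule eq_vecI) (use i len in \<open>auto simp: mm_def nth_append\<close>)
  qed (use i in auto)
next
  case False
  then have "\<not> OKd d (ys @ [y]) (ks @ [k])" using c by auto
  then show ?thesis using ok k False unfolding OKd_def by auto
qed

definition opts :: "('g \<Rightarrow> 'p \<Rightarrow> 'p) \<Rightarrow> 'p \<Rightarrow> 'g list \<Rightarrow> 'p list" where
  "opts \<phi> x gs = map (\<lambda>g. \<phi> g x) gs"

locale setting =
  fixes G :: "('g, 'z) monoid_scheme" and M :: "('n::finite \<Rightarrow> complex) set"
    and \<phi> :: "'g \<Rightarrow> ('n \<Rightarrow> complex) \<Rightarrow> ('n \<Rightarrow> complex)"
    and pm :: "'g \<Rightarrow> 'n \<Rightarrow> ('n \<Rightarrow> complex) \<Rightarrow> complex"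
  assumes irr: "irreducible_affine_variety M"
    and grp: "group G"
    and inM: "\<And>g x. g \<in> carrier G \<Longrightarrow> x \<in> M \<Longrightarrow> \<phi> g x \<in> M"
    and act1: "\<And>x. x \<in> M \<Longrightarrow> \<phi> \<one>\<^bsub>G\<^esub> x = x"
    and actm: "\<And>g h x. g \<in> carrier G \<Longrightarrow> h \<in> carrier G \<Longrightarrow> x \<in> M \<Longrightarrow> \<phi> (g \<otimes>\<^bsub>G\<^esub> h) x = \<phi> g (\<phi> h x)"
    and pm: "\<And>g i. g \<in> carrier G \<Longrightarrow> pm g i \<in> poly_funs"
    and pmM: "\<And>g x. g \<in> carrier G \<Longrightarrow> x \<in> M \<Longrightarrow> \<phi> g x = (\<lambda>i. pm g i x)"
begin

definition Bp :: "nat \<Rightarrow> 'g list \<Rightarrow> nat list \<Rightarrow> ('n \<Rightarrow> complex) \<Rightarrow> complex mat" where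
  "Bp d gs ks x = mat (length ks) (length gs) (\<lambda>(i,j). En d (ks!i) (\<lambda>l. pm (gs!j) l x))"

lemma Bp_M: "x \<in> M \<Longrightarrow> set gs \<subseteq> carrier G \<Longrightarrow> Bp d gs ks x = mm (En d) (opts \<phi> x gs) ks"
proof -
  assume x: "x \<in> M" and gs: "set gs \<subseteq> carrier G"
  have gj: "\<And>j. j < length gs \<Longrightarrow> \<phi> (gs ! j) x = (\<lambda>l. pm (gs!j) l x)"
    using gs x nth_mem pmM by blast
  show ?thesis by (rule eq_matI) (auto simp: Bp_def mm_def opts_def gj)
qed

lemma Bp_pf: "set gs \<subseteq> carrier G \<Longrightarrow> i < length ks \<Longrightarrow> j < length gs \<Longrightarrow>
    (\<lambda>x. Bp d gs ks x $$ (i,j)) \<in> poly_funs"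
proof -
  assume gs: "set gs \<subseteq> carrier G" and ij: "i < length ks" "j < length gs"
  have "(\<lambda>x. En d (ks!i) (\<lambda>l. pm (gs!j) l x)) \<in> poly_funs"
  proof -
    have "gs ! j \<in> carrier G" using gs ij nth_mem by blast
    then show ?thesis by (rule pf_comp[OF En_pf pm])
  qed
  then show ?thesis using ij by (simp add: Bp_def)
qed

lemma Bp_carrier: "length gs = length ks \<Longrightarrow> Bp d gs ks x \<in> carrier_mat (length ks) (length ks)"
  by (simp add: Bp_def)

lemma P_pf: "set gs \<subseteq> carrier G \<Longrightarrow> length gs = length ks \<Longrightarrow> (\<lambda>x. det (Bp d gs ks x)) \<in> poly_funs"
  by (rule pf_det[OF Bp_carrier]) (auto intro: Bp_pf)

lemma opts_M: "x \<in> M \<Longrightarrow> set gs \<subseteq> carrier G \<Longrightarrow> set (opts \<phi> x gs) \<subseteq> M"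
  unfolding opts_def using inM by auto

end

context setting begin

lemma caseB:
  assumes H: "\<And>d. \<exists>x\<in>M. \<exists>gs ks. set gs \<subseteq> carrier G \<and> OKd d (opts \<phi> x gs) ks \<and> mM M d \<le> length ks"
  shows "\<exists>x\<in>M. zariski_dense_in (orbit_of G \<phi> x) M"
proof -
  have "\<forall>d. \<exists>t. fst t \<in> M \<and> set (fst (snd t)) \<subseteq> carrier G \<and> OKd d (opts \<phi> (fst t) (fst (snd t))) (snd (snd t))
     \<and> mM M d \<le> length (snd (snd t))"
  proof
    fix d
    obtain x gs ks where "x\<in>M" "set gs \<subseteq> carrier G" "OKd d (opts \<phi> x gs) ks" "mM M d \<le> length ks"
      using H[of d] by blast
    then show "\<exists>t. fst t \<in> M \<and> set (fst (snd t)) \<subseteq> carrier G \<and> OKd d (opts \<phi> (fst t) (fst (snd t))) (snd (snd t))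
     \<and> mM M d \<le> length (snd (snd t))" by (intro exI[of _ "(x,gs,ks)"]) simp
  qed
  from choice[OF this] obtain t where t: "\<forall>d. fst (t d) \<in> M \<and> set (fst (snd (t d))) \<subseteq> carrier G \<and>
     OKd d (opts \<phi> (fst (t d)) (fst (snd (t d)))) (snd (snd (t d))) \<and> mM M d \<le> length (snd (snd (t d)))"
    by blast
  define xd where "xd d = fst (t d)" for d
  define gsd where "gsd d = fst (snd (t d))" for d
  define ksd where "ksd d = snd (snd (t d))" for d
  have xdM: "xd d \<in> M" and gsC: "set (gsd d) \<subseteq> carrier G" and okd: "OKd d (opts \<phi> (xd d) (gsd d)) (ksd d)"
    and ge: "mM M d \<le> length (ksd d)" for d
    using t unfolding xd_def gsd_def ksd_def by blast+
  have lenG: "length (gsd d) = length (ksd d)" for d using okd[of d] unfolding OKd_def opts_def by simp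
  define hB where "hB d x = det (Bp d (gsd d) (ksd d) x)" for d x
  have hB_pf: "hB d \<in> poly_funs" for d
  proof -
    have "hB d = (\<lambda>x. det (Bp d (gsd d) (ksd d) x))" by (rule ext) (simp add: hB_def)
    then show ?thesis using P_pf[OF gsC lenG] by simp
  qed
  have hB_nz: "\<exists>x\<in>M. hB d x \<noteq> 0" for d
  proof (rule bexI[OF _ xdM[of d]])
    show "hB d (xd d) \<noteq> 0" unfolding hB_def Bp_M[OF xdM gsC] using okd[of d] unfolding OKd_def by simp
  qed
  obtain xs where xs: "xs \<in> M" "\<And>d. hB d xs \<noteq> 0" using lemmaU[of M hB, OF irr hB_pf hB_nz] by blast
  have okx: "OKd d (opts \<phi> xs (gsd d)) (ksd d)" for d
    using okd[of d] xs(2)[of d] unfolding OKd_def hB_def Bp_M[OF xs(1) gsC] by (simp add: opts_def)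
  show ?thesis
  proof (rule bexI[OF _ xs(1)])
    show "zariski_dense_in (orbit_of G \<phi> xs) M"
      unfolding zariski_dense_in_def
    proof (intro conjI allI impI)
      show "orbit_of G \<phi> xs \<subseteq> M" unfolding orbit_of_def using inM xs(1) by auto
    next
      fix A assume A: "zariski_closed A \<and> orbit_of G \<phi> xs \<subseteq> A"
      then obtain F where F: "F \<subseteq> poly_funs" "A = {x. \<forall>f\<in>F. f x = 0}" unfolding zariski_closed_def by blast
      show "M \<subseteq> A"
      proof
        fix y assume y: "y \<in> M"
        have "f y = 0" if f: "f \<in> F" for f
        proof -
          have fo: "\<And>g. g \<in> carrier G \<Longrightarrow> f (\<phi> g xs) = 0" using A F f unfolding orbit_of_def by auto
          obtain d a where fa: "\<And>y. f y = (\<Sum>k<NN d TYPE('n). a k * En d k y)" using span[of f] f F by blast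
          define ys where "ys = opts \<phi> xs (gsd d)"
          define ks where "ks = ksd d"
          define r where "r = length ks"
          have ok: "OKd d ys ks" using okx unfolding ys_def ks_def by blast
          have ysM: "set ys \<subseteq> M" unfolding ys_def by (rule opts_M[OF xs(1) gsC])
          have lys: "length ys = r" using ok unfolding r_def OKd_def by simp
          define P where "P = det (mm (En d) ys ks)"
          have P0: "P \<noteq> 0" using ok unfolding P_def OKd_def by simp
          have cr: "En d k z * P = (\<Sum>j<r. Nmc (En d) ys ks k j * En d (ks!j) z)"
            if z: "z \<in> M" and k: "k < NN d TYPE('n)" for z k
          proof -
            have "det (mm (En d) (ys @ [z]) (ks @ [k])) = 0"
            proof (rule det0[OF ok k])
              show "k \<in> set ks \<or> \<not> OKd d (ys @ [z]) (ks @ [k])"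
              proof (rule ccontr)
                assume "\<not> (k \<in> set ks \<or> \<not> OKd d (ys @ [z]) (ks @ [k]))"
                then have ok2: "OKd d (ys @ [z]) (ks @ [k])" by blast
                have "set (ys @ [z]) \<subseteq> M" using ysM z by auto
                then have "length (ks @ [k]) \<in> MS M d" unfolding MS_def using ok2 by blast
                then have "Suc r \<le> mM M d" using mM_ge unfolding r_def by fastforce
                then show False using ge[of d] unfolding r_def ks_def by simp
              qed
            qed
            then show ?thesis unfolding P_def using cramer_row[OF lys r_def[symmetric]] ok unfolding OKd_def by blast
          qed
          define b where "b j = (\<Sum>k<NN d TYPE('n). a k * Nmc (En d) ys ks k j)" for j
          have fz: "f z * P = (\<Sum>j<r. b j * En d (ks!j) z)" if z: "z \<in> M" for z
          proof -
            have "f z * P = (\<Sum>k<NN d TYPE('n). a k * (En d k z * P))"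
              unfolding fa sum_distrib_right by (simp add: mult_ac)
            also have "\<dots> = (\<Sum>k<NN d TYPE('n). a k * (\<Sum>j<r. Nmc (En d) ys ks k j * En d (ks!j) z))"
              by (rule sum.cong) (auto simp: cr[OF z])
            also have "\<dots> = (\<Sum>j<r. b j * En d (ks!j) z)"
              unfolding b_def sum_distrib_left sum_distrib_right by (subst sum.swap) (simp add: mult_ac)
            finally show ?thesis .
          qed
          have b0: "b j = 0" if j: "j < r" for j
          proof (rule row_zero[OF mm_carrier[OF lys r_def[symmetric]] _ _ j])
            show "det (mm (En d) ys ks) \<noteq> 0" using P0 unfolding P_def .
          next
            fix i assume i: "i < r"
            have yi: "ys ! i = \<phi> (gsd d ! i) xs" using i lys unfolding ys_def opts_def by simp
            have gi: "gsd d ! i \<in> carrier G" using gsC i lys nth_mem unfolding ys_def opts_def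
              by (metis length_map subsetD)
            have yiM: "ys ! i \<in> M" using ysM i lys nth_mem by blast
            have "(\<Sum>j<r. b j * mm (En d) ys ks $$ (j, i)) = (\<Sum>j<r. b j * En d (ks!j) (ys!i))"
              by (rule sum.cong) (use i lys in \<open>auto simp: mm_def r_def\<close>)
            also have "\<dots> = f (ys ! i) * P" using fz[OF yiM] by simp
            also have "\<dots> = 0" using fo[OF gi] yi by simp
            finally show "(\<Sum>j<r. b j * mm (En d) ys ks $$ (j, i)) = 0" .
          qed
          have "f y * P = 0" using fz[OF y] b0 by simp
          then show ?thesis using P0 by simp
        qed
        then show "y \<in> A" using F by auto
      qed
    qed
  qed
qed

end

context setting begin

lemma caseA:
  assumes H: "\<And>x gs ks. x \<in> M \<Longrightarrow> set gs \<subseteq> carrier G \<Longrightarrow> OKd d (opts \<phi> x gs) ks \<Longrightarrow> length ks < mM M d"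
  shows "\<exists>f g. rational_fun_rep M f g \<and> (\<forall>\<gamma>\<in>carrier G. rat_eq M (f \<circ> \<phi> \<gamma>) (g \<circ> \<phi> \<gamma>) f g) \<and>
            \<not> (\<exists>c. rat_eq M f g (\<lambda>x. c) (\<lambda>x. 1))"
proof (rule ccontr)
  assume nC: "\<not> ?thesis"
  define R where "R = {length ks | x gs ks. x \<in> M \<and> set gs \<subseteq> carrier G \<and> OKd d (opts \<phi> x gs) ks}"
  have R_MS: "R \<subseteq> MS M d" unfolding R_def MS_def using opts_M by blast
  have R_fin: "finite R" using MS_fin R_MS finite_subset by blast
  obtain x00 where "x00 \<in> M" using irr unfolding irreducible_affine_variety_def by blast
  then have R0: "0 \<in> R" unfolding R_def
    by (intro CollectI exI[of _ x00] exI[of _ "[]::'g list"] exI[of _ "[]::nat list"]) (simp add: opts_def OKd_nil)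
  define r where "r = Max R"
  have "r \<in> R" unfolding r_def using R_fin R0 by (intro Max_in) auto
  then obtain x0 gs ks where x0: "x0 \<in> M" and gsC: "set gs \<subseteq> carrier G" and ok0: "OKd d (opts \<phi> x0 gs) ks"
    and rlen: "length ks = r" unfolding R_def by blast
  have rmax: "length ks' \<le> r" if "x \<in> M" "set gs' \<subseteq> carrier G" "OKd d (opts \<phi> x gs') ks'" for x gs' ks'
  proof -
    have "length ks' \<in> R" unfolding R_def using that by blast
    then show ?thesis unfolding r_def using R_fin by (simp add: Max_ge)
  qed
  have rlt: "r < mM M d" using H[OF x0 gsC ok0] rlen by simp
  have lgs: "length gs = r" using ok0 rlen unfolding OKd_def opts_def by simp
  have gi: "\<And>i. i < r \<Longrightarrow> gs ! i \<in> carrier G" using gsC lgs nth_mem by blast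
  define P where "P x = det (Bp d gs ks x)" for x
  have P_pf': "P \<in> poly_funs"
  proof -
    have "P = (\<lambda>x. det (Bp d gs ks x))" by (rule ext) (simp add: P_def)
    then show ?thesis using P_pf[OF gsC] lgs rlen by simp
  qed
  have PM: "P x = det (mm (En d) (opts \<phi> x gs) ks)" if "x \<in> M" for x
    unfolding P_def Bp_M[OF that gsC] ..
  have okx: "OKd d (opts \<phi> x gs) ks" if "x \<in> M" "P x \<noteq> 0" for x
    using ok0 that PM[OF that(1)] unfolding OKd_def by (simp add: opts_def)
  have Px0: "P x0 \<noteq> 0" using ok0 PM[OF x0] unfolding OKd_def by simp
  have PnzM: "\<exists>x\<in>M. P x \<noteq> 0" using x0 Px0 by blast
  define Nm where "Nm k j x = (\<Sum>i<r. En d k (\<lambda>l. pm (gs!i) l x) * adj_mat (Bp d gs ks x) $$ (i,j))" for k j x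
  have Nm_pf: "Nm k j \<in> poly_funs" if j: "j < r" for k j
  proof -
    have "Nm k j = (\<lambda>x. \<Sum>i<r. En d k (\<lambda>l. pm (gs!i) l x) * adj_mat (Bp d gs ks x) $$ (i,j))"
      by (rule ext) (simp add: Nm_def)
    also have "\<dots> \<in> poly_funs"
    proof (rule pf_sum[where f = "\<lambda>i x. En d k (\<lambda>l. pm (gs!i) l x) * adj_mat (Bp d gs ks x) $$ (i,j)"])
      fix i assume "i \<in> {..<r}"
      then have i: "i < r" by simp
      have 1: "(\<lambda>x. En d k (\<lambda>l. pm (gs!i) l x)) \<in> poly_funs" by (rule pf_comp[OF En_pf pm[OF gi[OF i]]])
      have 2: "(\<lambda>x. adj_mat (Bp d gs ks x) $$ (i,j)) \<in> poly_funs"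
        by (rule pf_adj[OF Bp_carrier]) (use lgs rlen i j gsC in \<open>auto intro: Bp_pf\<close>)
      show "(\<lambda>x. En d k (\<lambda>l. pm (gs!i) l x) * adj_mat (Bp d gs ks x) $$ (i,j)) \<in> poly_funs"
        using pf_mult[OF 1 2] by simp
    qed
    finally show ?thesis .
  qed
  have NmM: "Nm k j x = Nmc (En d) (opts \<phi> x gs) ks k j" if x: "x \<in> M" for k j x
  proof -
    have "\<And>i. i < r \<Longrightarrow> opts \<phi> x gs ! i = (\<lambda>l. pm (gs!i) l x)"
      using pmM[OF gi x] lgs by (simp add: opts_def)
    then show ?thesis unfolding Nm_def Nmc_def Bp_M[OF x gsC]
      using lgs by (simp add: opts_def)
  qed
  have CR: "En d k (\<phi> g x) * P x = (\<Sum>j<r. Nm k j x * En d (ks!j) (\<phi> g x))"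
    if x: "x \<in> M" and Px: "P x \<noteq> 0" and g: "g \<in> carrier G" and k: "k < NN d TYPE('n)" for x g k
  proof -
    have ok: "OKd d (opts \<phi> x gs) ks" by (rule okx[OF x Px])
    have "det (mm (En d) (opts \<phi> x gs @ [\<phi> g x]) (ks @ [k])) = 0"
    proof (rule det0[OF ok k])
      show "k \<in> set ks \<or> \<not> OKd d (opts \<phi> x gs @ [\<phi> g x]) (ks @ [k])"
      proof (rule ccontr)
        assume "\<not> (k \<in> set ks \<or> \<not> OKd d (opts \<phi> x gs @ [\<phi> g x]) (ks @ [k]))"
        then have "OKd d (opts \<phi> x (gs @ [g])) (ks @ [k])" by (simp add: opts_def)
        moreover have "set (gs @ [g]) \<subseteq> carrier G" using gsC g by auto
        ultimately have "length (ks @ [k]) \<le> r" using rmax x by blast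
        then show False using rlen by simp
      qed
    qed
    moreover have "length (opts \<phi> x gs) = r" using lgs by (simp add: opts_def)
    ultimately have "En d k (\<phi> g x) * det (mm (En d) (opts \<phi> x gs) ks) =
        (\<Sum>j<r. Nmc (En d) (opts \<phi> x gs) ks k j * En d (ks!j) (\<phi> g x))"
      using cramer_row[of "opts \<phi> x gs" r ks "En d"] ok rlen unfolding OKd_def by blast
    then show ?thesis using PM[OF x] NmM[OF x] by simp
  qed
  have inv: "Nm k j (\<phi> \<gamma> x) * P x = Nm k j x * P (\<phi> \<gamma> x)"
    if k: "k < NN d TYPE('n)" and j: "j < r" and \<gamma>: "\<gamma> \<in> carrier G" and x: "x \<in> M" for k j \<gamma> x
  proof -
    define pg where "pg x = (\<lambda>l. pm \<gamma> l x)" for x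
    define H1 where "H1 x = Nm k j (pg x) * P x - Nm k j x * P (pg x)" for x
    define H2 where "H2 x = P x * P (pg x)" for x
    have Ppg: "(\<lambda>x. P (pg x)) \<in> poly_funs" unfolding pg_def by (rule pf_comp[OF P_pf' pm[OF \<gamma>]])
    have Npg: "(\<lambda>x. Nm k j (pg x)) \<in> poly_funs" unfolding pg_def by (rule pf_comp[OF Nm_pf[OF j] pm[OF \<gamma>]])
    have H1pf: "H1 \<in> poly_funs"
    proof -
      have "H1 = (\<lambda>x. (\<lambda>x. Nm k j (pg x) * P x) x - (\<lambda>x. Nm k j x * P (pg x)) x)"
        by (rule ext) (simp add: H1_def)
      also have "\<dots> \<in> poly_funs" using Npg P_pf' Nm_pf[OF j] Ppg by (intro pf_minus pf_mult)
      finally show ?thesis .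
    qed
    have H2pf: "H2 \<in> poly_funs"
    proof -
      have "H2 = (\<lambda>x. P x * P (pg x))" by (rule ext) (simp add: H2_def)
      also have "\<dots> \<in> poly_funs" using P_pf' Ppg by (intro pf_mult)
      finally show ?thesis .
    qed
    have pgM: "pg z = \<phi> \<gamma> z" if "z \<in> M" for z unfolding pg_def using pmM[OF \<gamma> that] by simp
    have key: "H1 z = 0" if z: "z \<in> M" and H2z: "H2 z \<noteq> 0" for z
    proof -
      define z' where "z' = \<phi> \<gamma> z"
      have z'M: "z' \<in> M" unfolding z'_def using inM[OF \<gamma> z] .
      have Pz: "P z \<noteq> 0" and Pz': "P z' \<noteq> 0" using H2z pgM[OF z] unfolding H2_def z'_def by auto
      define b where "b j' = Nm k j' z' * P z - Nm k j' z * P z'" for j'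
      have lz': "length (opts \<phi> z' gs) = r" using lgs by (simp add: opts_def)
      have b0: "b j = 0"
      proof (rule row_zero[OF mm_carrier[OF lz' rlen] _ _ j])
        show "det (mm (En d) (opts \<phi> z' gs) ks) \<noteq> 0" using Pz' PM[OF z'M] by simp
      next
        fix i assume i: "i < r"
        define y where "y = \<phi> (gs!i) z'"
        have y2: "\<phi> (gs!i \<otimes>\<^bsub>G\<^esub> \<gamma>) z = y" unfolding y_def z'_def using actm[OF gi[OF i] \<gamma> z] .
        have gg: "gs!i \<otimes>\<^bsub>G\<^esub> \<gamma> \<in> carrier G" using group.subgroup_self[OF grp] gi[OF i] \<gamma>
          by (simp add: monoid.m_closed[OF group.is_monoid[OF grp]])
        have c1: "En d k y * P z' = (\<Sum>j<r. Nm k j z' * En d (ks!j) y)"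
          unfolding y_def by (rule CR[OF z'M Pz' gi[OF i] k])
        have c2: "En d k y * P z = (\<Sum>j<r. Nm k j z * En d (ks!j) y)"
          using CR[OF z Pz gg k] unfolding y2 .
        have "(\<Sum>j'<r. b j' * mm (En d) (opts \<phi> z' gs) ks $$ (j', i)) = (\<Sum>j'<r. b j' * En d (ks!j') y)"
          by (rule sum.cong) (use i lgs rlen in \<open>auto simp: mm_def opts_def y_def\<close>)
        also have "\<dots> = (\<Sum>j'<r. Nm k j' z' * En d (ks!j') y) * P z - (\<Sum>j'<r. Nm k j' z * En d (ks!j') y) * P z'"
          unfolding b_def sum_distrib_right sum_subtractf[symmetric] by (rule sum.cong) (auto simp: algebra_simps)
        also have "\<dots> = 0" unfolding c1[symmetric] c2[symmetric] by simp
        finally show "(\<Sum>j'<r. b j' * mm (En d) (opts \<phi> z' gs) ks $$ (j', i)) = 0" .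
      qed
      then show ?thesis unfolding H1_def b_def pgM[OF z] z'_def by simp
    qed
    have ex: "\<exists>z\<in>M. H2 z \<noteq> 0"
    proof -
      have ig: "inv\<^bsub>G\<^esub> \<gamma> \<in> carrier G" using group.inv_closed[OF grp \<gamma>] .
      define x1 where "x1 = \<phi> (inv\<^bsub>G\<^esub> \<gamma>) x0"
      have x1M: "x1 \<in> M" unfolding x1_def using inM[OF ig x0] .
      have "pg x1 = \<phi> \<gamma> x1" by (rule pgM[OF x1M])
      also have "\<dots> = \<phi> (\<gamma> \<otimes>\<^bsub>G\<^esub> inv\<^bsub>G\<^esub> \<gamma>) x0" unfolding x1_def using actm[OF \<gamma> ig x0] by simp
      also have "\<dots> = x0" using group.r_inv[OF grp \<gamma>] act1[OF x0] by simp
      finally have "\<exists>z\<in>M. P (pg z) \<noteq> 0" using x1M Px0 by auto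
      then show ?thesis using irr_mult[OF irr P_pf' Ppg PnzM] unfolding H2_def by simp
    qed
    have "H1 x = 0" using irr_cancel[OF irr H2pf H1pf ex key] x by blast
    then show ?thesis unfolding H1_def pgM[OF x] by simp
  qed
  have const: "\<exists>c. \<forall>x\<in>M. Nm k j x = c * P x" if k: "k < NN d TYPE('n)" and j: "j < r" for k j
  proof (rule ccontr)
    assume nc: "\<not> (\<exists>c. \<forall>x\<in>M. Nm k j x = c * P x)"
    have "rational_fun_rep M (Nm k j) P" unfolding rational_fun_rep_def using Nm_pf[OF j] P_pf' PnzM by blast
    moreover have "\<forall>\<gamma>\<in>carrier G. rat_eq M (Nm k j \<circ> \<phi> \<gamma>) (P \<circ> \<phi> \<gamma>) (Nm k j) P"
      unfolding rat_eq_def using inv[OF k j] by simp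
    moreover have "\<not> (\<exists>c. rat_eq M (Nm k j) P (\<lambda>x. c) (\<lambda>x. 1))" unfolding rat_eq_def using nc by simp
    ultimately show False using nC by blast
  qed
  have "\<forall>kj. \<exists>c. fst kj < NN d TYPE('n) \<and> snd kj < r \<longrightarrow> (\<forall>x\<in>M. Nm (fst kj) (snd kj) x = c * P x)"
    using const by blast
  from choice[OF this] obtain cc where cc: "\<And>k j x. k < NN d TYPE('n) \<Longrightarrow> j < r \<Longrightarrow> x \<in> M \<Longrightarrow>
     Nm k j x = cc (k,j) * P x" by force
  have lin: "En d k y = (\<Sum>j<r. cc (k,j) * En d (ks!j) y)" if k: "k < NN d TYPE('n)" and y: "y \<in> M" for k y
  proof -
    define L where "L y = En d k y - (\<Sum>j<r. cc (k,j) * En d (ks!j) y)" for y :: "'n \<Rightarrow> complex"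
    have Lpf: "L \<in> poly_funs"
    proof -
      have "L = (\<lambda>y. En d k y - (\<Sum>j<r. cc (k,j) * En d (ks!j) y))" by (rule ext) (simp add: L_def)
      also have "\<dots> \<in> poly_funs"
        by (intro pf_minus En_pf pf_sum[where f = "\<lambda>j y. cc (k,j) * En d (ks!j) y"] pf_scale)
      finally show ?thesis .
    qed
    have "L z = 0" if z: "z \<in> M" and Pz: "P z \<noteq> 0" for z
    proof -
      have "En d k z * P z = (\<Sum>j<r. Nm k j z * En d (ks!j) z)"
        using CR[OF z Pz group.is_monoid[OF grp, THEN monoid.one_closed] k] act1[OF z] by simp
      also have "\<dots> = (\<Sum>j<r. cc (k,j) * En d (ks!j) z) * P z"
        unfolding sum_distrib_right by (rule sum.cong) (auto simp: cc[OF k _ z])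
      finally show ?thesis unfolding L_def using Pz by simp
    qed
    then have "\<forall>z\<in>M. L z = 0" using irr_cancel[OF irr P_pf' Lpf PnzM] by blast
    then show ?thesis using y unfolding L_def by simp
  qed
  define m where "m = mM M d"
  have "m \<in> MS M d" unfolding m_def by (rule mM_in)
  then obtain zs ls where zsM: "set zs \<subseteq> M" and okz: "OKd d zs ls" and lm: "length ls = m"
    unfolding MS_def by blast
  have lzs: "length zs = m" using okz lm unfolding OKd_def by simp
  have lsN: "\<And>i. i < m \<Longrightarrow> ls ! i < NN d TYPE('n)" using okz lm nth_mem unfolding OKd_def by blast
  obtain lam where lam: "\<exists>t\<in>{..<m}. lam t \<noteq> 0" "\<forall>j\<in>{..<r}. (\<Sum>i\<in>{..<m}. lam i * cc (ls!i, j)) = 0"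
    using lin_dep[of "{..<r}" "{..<m}" "\<lambda>i j. cc (ls!i, j)"] rlt m_def by auto
  have "lam i = 0" if i: "i < m" for i
  proof (rule row_zero[OF mm_carrier[OF lzs lm] _ _ i])
    show "det (mm (En d) zs ls) \<noteq> 0" using okz unfolding OKd_def by simp
  next
    fix t assume t: "t < m"
    have ztM: "zs ! t \<in> M" using zsM t lzs nth_mem by blast
    have "(\<Sum>i<m. lam i * mm (En d) zs ls $$ (i, t)) = (\<Sum>i<m. lam i * (\<Sum>j<r. cc (ls!i, j) * En d (ks!j) (zs!t)))"
      by (rule sum.cong) (use t lzs lm lin[OF lsN ztM] in \<open>auto simp: mm_def\<close>)
    also have "\<dots> = (\<Sum>j<r. (\<Sum>i<m. lam i * cc (ls!i, j)) * En d (ks!j) (zs!t))"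
      unfolding sum_distrib_left sum_distrib_right by (subst sum.swap) (simp add: mult_ac)
    also have "\<dots> = 0" using lam(2) by simp
    finally show "(\<Sum>i<m. lam i * mm (En d) zs ls $$ (i, t)) = 0" .
  qed
  then show False using lam(1) by auto
qed

end

theorem theorem2p2:
  fixes G :: "('g, 'z) monoid_scheme"
    and M :: "('n::finite \<Rightarrow> complex) set"
    and \<phi> :: "'g \<Rightarrow> ('n \<Rightarrow> complex) \<Rightarrow> ('n \<Rightarrow> complex)"
  assumes "finitely_presented G"
    and "irreducible_affine_variety M"
    and "algebraic_action G M \<phi>"
  shows "(\<exists>f g. rational_fun_rep M f g \<and>
            (\<forall>\<gamma>\<in>carrier G. rat_eq M (f \<circ> \<phi> \<gamma>) (g \<circ> \<phi> \<gamma>) f g) \<and>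
            \<not> (\<exists>c. rat_eq M f g (\<lambda>x. c) (\<lambda>x. 1)))
       \<or> (\<exists>x\<in>M. zariski_dense_in (orbit_of G \<phi> x) M)"
proof -
  have grp: "group G" using assms(1) unfolding finitely_presented_def by auto
  have aut: "\<And>g. g \<in> carrier G \<Longrightarrow> algebraic_automorphism M (\<phi> g)"
    and act1: "\<And>x. x \<in> M \<Longrightarrow> \<phi> \<one>\<^bsub>G\<^esub> x = x"
    and actm: "\<And>g h x. g \<in> carrier G \<Longrightarrow> h \<in> carrier G \<Longrightarrow> x \<in> M \<Longrightarrow> \<phi> (g \<otimes>\<^bsub>G\<^esub> h) x = \<phi> g (\<phi> h x)"
    using assms(3) unfolding algebraic_action_def by auto
  have inM: "\<And>g x. g \<in> carrier G \<Longrightarrow> x \<in> M \<Longrightarrow> \<phi> g x \<in> M"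
    using aut unfolding algebraic_automorphism_def regular_map_def by blast
  have "\<forall>g. \<exists>p. g \<in> carrier G \<longrightarrow> (\<forall>i. p i \<in> poly_funs) \<and> (\<forall>x\<in>M. \<forall>i. \<phi> g x i = p i x)"
    using aut unfolding algebraic_automorphism_def regular_map_def by blast
  from choice[OF this] obtain pm where pm0: "\<forall>g. g \<in> carrier G \<longrightarrow> (\<forall>i. pm g i \<in> poly_funs) \<and>
      (\<forall>x\<in>M. \<forall>i. \<phi> g x i = pm g i x)" by blast
  have pm: "\<And>g i. g \<in> carrier G \<Longrightarrow> pm g i \<in> poly_funs" using pm0 by blast
  have pmM: "\<And>g x. g \<in> carrier G \<Longrightarrow> x \<in> M \<Longrightarrow> \<phi> g x = (\<lambda>i. pm g i x)"
    using pm0 by fastforce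
  interpret S: setting G M \<phi> pm
    by (rule setting.intro[OF assms(2) grp inM act1 actm pm pmM])
  show ?thesis
  proof (cases "\<exists>d. \<forall>x gs ks. x \<in> M \<longrightarrow> set gs \<subseteq> carrier G \<longrightarrow> OKd d (opts \<phi> x gs) ks \<longrightarrow> length ks < mM M d")
    case True
    then obtain d where d: "\<And>x gs ks. x \<in> M \<Longrightarrow> set gs \<subseteq> carrier G \<Longrightarrow> OKd d (opts \<phi> x gs) ks \<Longrightarrow> length ks < mM M d"
      by blast
    show ?thesis by (rule disjI1) (rule S.caseA[OF d])
  next
    case False
    have "\<exists>x\<in>M. \<exists>gs ks. set gs \<subseteq> carrier G \<and> OKd d (opts \<phi> x gs) ks \<and> mM M d \<le> length ks" for d
    proof -
      have "\<not> (\<forall>x gs ks. x \<in> M \<longrightarrow> set gs \<subseteq> carrier G \<longrightarrow> OKd d (opts \<phi> x gs) ks \<longrightarrow> length ks < mM M d)"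
        using False by blast
      then obtain x gs ks where "x \<in> M" "set gs \<subseteq> carrier G" "OKd d (opts \<phi> x gs) ks" "\<not> length ks < mM M d"
        by blast
      then show ?thesis by (intro bexI[of _ x] exI[of _ gs] exI[of _ ks]) auto
    qed
    then show ?thesis by (rule disjI2[OF S.caseB])
  qed
qed

end
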